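(* Let $\mathrm{OP}_n=\mathbb{C}[\partial\mathbf{x},E_1,\dots,E_{n-1}]\,\Delta(\mathbf{x})$. A polynomial $f(\mathbf{x},\mathbf{y})\in\mathbb{C}[\mathbf{x},\mathbf{y}]$ lies in $\mathrm{OP}_n^{\perp}$ if and only if $$f(\mathbf{x},\phi_\lambda(\mathbf{x}))\in(e_1(\mathbf{x}),\dots,e_n(\mathbf{x}))$$ identically in $\lambda$, i.e. in the ideal generated by $e_1(\mathbf{x}),\dots,e_n(\mathbf{x})$ in $\mathbb{C}[\mathbf{x},\lambda_1,\dots,\lambda_{n-1}]$, where $\phi_\lambda(z)=\lambda_{n-1}z^{n-1}+\cdots+\lambda_1z$ and $f(\mathbf{x},\phi_\lambda(\mathbf{x}))$ means $f$ with each $y_j$ replaced by $\phi_\lambda(x_j)$.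
   Context: $\mathbb{C}[\mathbf{x},\mathbf{y}]=\mathbb{C}[x_1,\dots,x_n,y_1,\dots,y_n]$; $E_k=\sum_{i=1}^n y_i\,\partial x_i^{\,k}$; $\Delta(\mathbf{x})=\prod_{i<j}(x_i-x_j)$; $e_i(\mathbf{x})$ is the $i$-th elementary symmetric polynomial; $\lambda_1,\dots,\lambda_{n-1}$ are indeterminates. The inner product on $\mathbb{C}[\mathbf{x},\mathbf{y}]$ is $(f,g)=\bigl(g(\partial\mathbf{x},\partial\mathbf{y})f(\mathbf{x},\mathbf{y})\bigr)|_{\mathbf{x},\mathbf{y}\mapsto 0}$, and $\perp$ denotes orthogonal complement with respect to it. *)

theory Defs
  imports Complex_Main "HOL-Library.Poly_Mapping"
begin

text \<open>Variables: X i = x_i, Y i = y_i (1 \<le> i \<le> n), Lam k = lambda_k (1 \<le> k \<le> n-1).\<close>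

datatype var = X nat | Y nat | Lam nat

type_synonym mpoly = "(var \<Rightarrow>\<^sub>0 nat) \<Rightarrow>\<^sub>0 complex"

definition const :: "complex \<Rightarrow> mpoly" where
  "const c = Poly_Mapping.single 0 c"

definition pvar :: "var \<Rightarrow> mpoly" where
  "pvar v = Poly_Mapping.single (Poly_Mapping.single v 1) 1"

definition poly_in :: "var set \<Rightarrow> mpoly \<Rightarrow> bool" where
  "poly_in V p \<longleftrightarrow> (\<forall>m\<in>Poly_Mapping.keys (p::mpoly). Poly_Mapping.keys (m::var \<Rightarrow>\<^sub>0 nat) \<subseteq> V)"

definition xy_vars :: "nat \<Rightarrow> var set" where
  "xy_vars n = X ` {1..n} \<union> Y ` {1..n}"

definition xlam_vars :: "nat \<Rightarrow> var set" where
  "xlam_vars n = X ` {1..n} \<union> Lam ` {1..n-1}"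

definition mderiv :: "(var \<Rightarrow>\<^sub>0 nat) \<Rightarrow> mpoly \<Rightarrow> mpoly" where
  "mderiv m p = (\<Sum>a\<in>Poly_Mapping.keys p. Poly_Mapping.single (a - m)
       (Poly_Mapping.lookup p a * (\<Prod>v\<in>Poly_Mapping.keys m. \<Prod>t<Poly_Mapping.lookup m v. of_nat (Poly_Mapping.lookup a v - t))))"

definition pd :: "var \<Rightarrow> mpoly \<Rightarrow> mpoly" where
  "pd v = mderiv (Poly_Mapping.single v 1)"

definition Eop :: "nat \<Rightarrow> nat \<Rightarrow> mpoly \<Rightarrow> mpoly" where
  "Eop n k p = (\<Sum>i=1..n. pvar (Y i) * (pd (X i) ^^ k) p)"

definition Vandermonde :: "nat \<Rightarrow> mpoly" where
  "Vandermonde n = (\<Prod>(i,j)\<in>{(i,j). 1 \<le> i \<and> i < j \<and> j \<le> n}. pvar (X i) - pvar (X j))"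

definition esym :: "nat \<Rightarrow> nat \<Rightarrow> mpoly" where
  "esym n i = (\<Sum>S\<in>{S. S \<subseteq> {1..n} \<and> card S = i}. \<Prod>j\<in>S. pvar (X j))"

text \<open>\<open>OP_n = \<complex>[\<partial>x, E_1,\<dots>,E_{n-1}] \<Delta>(x)\<close>: the smallest complex subspace
  containing \<open>\<Delta>\<close> and stable under all \<open>\<partial>x_i\<close> and \<open>E_k\<close>.\<close>
inductive_set OP :: "nat \<Rightarrow> mpoly set" for n where
  OP_Delta: "Vandermonde n \<in> OP n"
| OP_zero: "0 \<in> OP n"
| OP_add: "p \<in> OP n \<Longrightarrow> q \<in> OP n \<Longrightarrow> p + q \<in> OP n"
| OP_smult: "p \<in> OP n \<Longrightarrow> const c * p \<in> OP n"
| OP_dx: "p \<in> OP n \<Longrightarrow> i \<in> {1..n} \<Longrightarrow> pd (X i) p \<in> OP n"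
| OP_E: "p \<in> OP n \<Longrightarrow> k \<in> {1..n-1} \<Longrightarrow> Eop n k p \<in> OP n"

text \<open>Differential operator \<open>g(\<partial>)\<close> applied to f, and the pairing
  \<open>(f,g) = (g(\<partial>) f)|_{0}\<close>.\<close>
definition apply_diff :: "mpoly \<Rightarrow> mpoly \<Rightarrow> mpoly" where
  "apply_diff g f = (\<Sum>m\<in>Poly_Mapping.keys g. const (Poly_Mapping.lookup g m) * mderiv m f)"

definition pair :: "mpoly \<Rightarrow> mpoly \<Rightarrow> complex" where
  "pair f g = Poly_Mapping.lookup (apply_diff g f) 0"

definition orth :: "mpoly set \<Rightarrow> mpoly set" where
  "orth S = {f. \<forall>g\<in>S. pair f g = 0}"

definition subst :: "(var \<Rightarrow> mpoly) \<Rightarrow> mpoly \<Rightarrow> mpoly" where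
  "subst \<sigma> p = (\<Sum>a\<in>Poly_Mapping.keys p. const (Poly_Mapping.lookup p a) * (\<Prod>v\<in>Poly_Mapping.keys a. \<sigma> v ^ Poly_Mapping.lookup a v))"

definition phi :: "nat \<Rightarrow> mpoly \<Rightarrow> mpoly" where
  "phi n z = (\<Sum>k=1..n-1. pvar (Lam k) * z ^ k)"

definition phi_subst :: "nat \<Rightarrow> var \<Rightarrow> mpoly" where
  "phi_subst n v = (case v of Y j \<Rightarrow> phi n (pvar (X j)) | _ \<Rightarrow> pvar v)"

definition in_esym_ideal :: "nat \<Rightarrow> mpoly \<Rightarrow> bool" where
  "in_esym_ideal n p \<longleftrightarrow>
     (\<exists>q. (\<forall>i\<in>{1..n}. poly_in (xlam_vars n) (q i)) \<and> p = (\<Sum>i=1..n. q i * esym n i))"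

end

theory Submission
  imports Defs "HOL-Computational_Algebra.Formal_Power_Series"
begin


abbreviation lk where "lk \<equiv> Poly_Mapping.lookup"
abbreviation ks where "ks \<equiv> Poly_Mapping.keys"
abbreviation sg where "sg \<equiv> Poly_Mapping.single"

definition ev :: "var \<Rightarrow> (var \<Rightarrow>\<^sub>0 nat)" where "ev v = sg v 1"

lemma keys_sg: "ks (sg a c) = (if c = 0 then {} else {a})"
  by simp

lemma poly_sum_singles: "p = (\<Sum>a\<in>ks p. sg a (lk p a))"
proof (rule poly_mapping_eqI)
  fix k
  show "lk p k = lk (\<Sum>a\<in>ks p. sg a (lk p a)) k"
    by (cases "k \<in> ks p") (auto simp: lookup_sum lookup_single when_def in_keys_iff)
qed

lemma poly_induct_keys:
  fixes p :: "('a \<Rightarrow>\<^sub>0 'b::comm_monoid_add)"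
  assumes "P 0" "\<And>a c. Q a \<Longrightarrow> P (sg a c)" "\<And>p q. P p \<Longrightarrow> P q \<Longrightarrow> P (p+q)"
    "\<forall>a\<in>ks p. Q a"
  shows "P p"
proof -
  have "finite A \<Longrightarrow> \<forall>a\<in>A. Q a \<Longrightarrow> P (\<Sum>a\<in>A. sg a (lk p a))" for A
    by (induction A rule: finite_induct) (auto intro: assms)
  from this[of "ks p"] assms(4) poly_sum_singles[of p] show ?thesis by simp
qed

lemma poly_induct:
  fixes p :: "('a \<Rightarrow>\<^sub>0 'b::comm_monoid_add)"
  assumes "P 0" "\<And>a c. P (sg a c)" "\<And>p q. P p \<Longrightarrow> P q \<Longrightarrow> P (p+q)"
  shows "P p"
  using poly_induct_keys[of P "\<lambda>_. True"] assms by auto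

lemma lookup_const_mult: "lk (const c * p) a = c * lk p a"
proof -
  have "const c * p = Poly_Mapping.map ((*) c) p"
    by (simp add: const_def mult_map_scale_conv_mult)
  then show ?thesis by (simp add: Poly_Mapping.map.rep_eq when_def)
qed

lemma const_mult_sg: "const c * sg a d = sg a (c * d)"
  by (simp add: const_def mult_single)

lemma const_mult_const: "const c * const d = const (c * d)"
  by (simp add: const_def mult_single)

lemma const_0[simp]: "const 0 = 0" by (simp add: const_def)
lemma const_1[simp]: "const 1 = 1" by (simp add: const_def)
lemma const_add: "const (c + d) = const c + const d" by (simp add: const_def single_add)

lemma pvar_mult_sg: "pvar v * sg a c = sg (a + ev v) c"
  by (simp add: pvar_def ev_def mult_single add.commute)

lemma sg_mult_sg: "sg a c * sg b d = sg (a + b) (c * d)"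
  by (simp add: mult_single)

definition mfact :: "(var \<Rightarrow>\<^sub>0 nat) \<Rightarrow> nat" where
  "mfact a = (\<Prod>v\<in>ks a. fact (lk a v))"

lemma mfact_superset: "finite K \<Longrightarrow> ks a \<subseteq> K \<Longrightarrow> mfact a = (\<Prod>v\<in>K. fact (lk a v))"
  unfolding mfact_def
  by (rule prod.mono_neutral_left) (auto simp: in_keys_iff)

lemma mfact_pos: "mfact a > 0"
  by (simp add: mfact_def)

lemma mfact_add_ev: "mfact (a + ev v) = mfact a * (lk a v + 1)"
proof -
  have K: "finite (insert v (ks a))" by simp
  have "mfact (a + ev v) = (\<Prod>w\<in>insert v (ks a). fact (lk (a + ev v) w))"
    by (rule mfact_superset) (use keys_add[of a "ev v"] in \<open>auto simp: ev_def\<close>)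
  also have "\<dots> = fact (lk a v + 1) * (\<Prod>w\<in>ks a - {v}. fact (lk a w))"
    by (subst prod.insert_remove) (auto simp: lookup_add ev_def lookup_single when_def split: if_splits intro!: prod.cong[OF refl])
  also have "mfact a = fact (lk a v) * (\<Prod>w\<in>ks a - {v}. fact (lk a w))"
    by (subst mfact_superset[OF K]) (auto simp: prod.insert_remove)
  ultimately show ?thesis by (simp add: algebra_simps)
qed

definition PP :: "mpoly \<Rightarrow> mpoly \<Rightarrow> complex" where
  "PP f g = (\<Sum>a\<in>ks f. lk f a * lk g a * of_nat (mfact a))"

lemma PP_superset: "finite K \<Longrightarrow> ks f \<subseteq> K \<Longrightarrow> PP f g = (\<Sum>a\<in>K. lk f a * lk g a * of_nat (mfact a))"
  unfolding PP_def by (rule sum.mono_neutral_left) (auto simp: in_keys_iff)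

lemma PP_superset2: "finite K \<Longrightarrow> ks g \<subseteq> K \<Longrightarrow> PP f g = (\<Sum>a\<in>K. lk f a * lk g a * of_nat (mfact a))"
proof -
  assume K: "finite K" "ks g \<subseteq> K"
  have "PP f g = (\<Sum>a\<in>ks f \<union> K. lk f a * lk g a * of_nat (mfact a))"
    using K by (intro PP_superset) auto
  also have "\<dots> = (\<Sum>a\<in>K. lk f a * lk g a * of_nat (mfact a))"
    using K by (intro sum.mono_neutral_right) (auto simp: in_keys_iff)
  finally show ?thesis .
qed

lemma PP_sym: "PP f g = PP g f"
  using PP_superset[of "ks f \<union> ks g" f g] PP_superset[of "ks f \<union> ks g" g f]
  by (simp add: mult.commute mult.left_commute)

lemma PP_add1: "PP (f + f') g = PP f g + PP f' g"
proof -
  let ?K = "ks f \<union> ks f'"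
  have "PP (f + f') g = (\<Sum>a\<in>?K. lk (f+f') a * lk g a * of_nat (mfact a))"
    by (rule PP_superset) (auto dest: keys_add[THEN subsetD])
  also have "\<dots> = (\<Sum>a\<in>?K. lk f a * lk g a * of_nat (mfact a)) + (\<Sum>a\<in>?K. lk f' a * lk g a * of_nat (mfact a))"
    by (simp add: lookup_add algebra_simps sum.distrib)
  also have "\<dots> = PP f g + PP f' g"
    by (simp add: PP_superset[symmetric])
  finally show ?thesis .
qed

lemma PP_add2: "PP f (g + g') = PP f g + PP f g'"
  by (simp add: PP_sym[of f] PP_add1)

lemma PP_smult1: "PP (const c * f) g = c * PP f g"
proof -
  have "PP (const c * f) g = (\<Sum>a\<in>ks f. lk (const c * f) a * lk g a * of_nat (mfact a))"
    by (rule PP_superset) (auto simp: lookup_const_mult in_keys_iff)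
  also have "\<dots> = c * PP f g"
    unfolding PP_def sum_distrib_left by (rule sum.cong) (auto simp: lookup_const_mult)
  finally show ?thesis .
qed

lemma PP_smult2: "PP f (const c * g) = c * PP f g"
  by (simp add: PP_sym[of f] PP_smult1)

lemma PP_zero1[simp]: "PP 0 g = 0" by (simp add: PP_def)
lemma PP_zero2[simp]: "PP f 0 = 0" by (simp add: PP_def)

lemma PP_uminus1: "PP (- f) g = - PP f g"
  using PP_add1[of f "-f" g] by (simp add: eq_neg_iff_add_eq_0 add.commute)
lemma PP_uminus2: "PP f (- g) = - PP f g"
  using PP_add2[of f g "-g"] by (simp add: eq_neg_iff_add_eq_0 add.commute)
lemma PP_diff1: "PP (f - f') g = PP f g - PP f' g"
  using PP_add1[of f "-f'" g] PP_uminus1 by simp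
lemma PP_diff2: "PP f (g - g') = PP f g - PP f g'"
  using PP_add2[of f g "-g'"] PP_uminus2 by simp

lemma PP_sum1: "PP (\<Sum>i\<in>A. f i) g = (\<Sum>i\<in>A. PP (f i) g)"
  by (induction A rule: infinite_finite_induct) (auto simp: PP_add1)
lemma PP_sum2: "PP g (\<Sum>i\<in>A. f i) = (\<Sum>i\<in>A. PP g (f i))"
  by (induction A rule: infinite_finite_induct) (auto simp: PP_add2)

lemma PP_sg: "PP (sg a c) (sg b d) = (if a = b then c * d * of_nat (mfact a) else 0)"
  by (cases "c = 0") (auto simp: PP_def lookup_single when_def)

lemma bilinear_eq:
  fixes L R :: "mpoly \<Rightarrow> mpoly \<Rightarrow> 'c::cancel_comm_monoid_add"
  assumes "\<And>f f' g. L (f + f') g = L f g + L f' g" "\<And>f g g'. L f (g + g') = L f g + L f g'"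
    "\<And>f f' g. R (f + f') g = R f g + R f' g" "\<And>f g g'. R f (g + g') = R f g + R f g'"
    "\<And>a c b d. L (sg a c) (sg b d) = R (sg a c) (sg b d)"
  shows "L f g = (R f g :: 'c::cancel_comm_monoid_add)"
proof -
  have L0: "L 0 g = 0" for g using assms(1)[of 0 0 g] by simp
  have L0': "L f 0 = 0" for f using assms(2)[of f 0 0] by simp
  have R0: "R 0 g = 0" for g using assms(3)[of 0 0 g] by simp
  have R0': "R f 0 = 0" for f using assms(4)[of f 0 0] by simp
  have "L (sg a c) g = R (sg a c) g" for a c
    by (induction g rule: poly_induct) (auto simp: L0' R0' assms)
  then show ?thesis
    by (induction f rule: poly_induct) (auto simp: L0 R0 assms)
qed


definition ff :: "(var \<Rightarrow>\<^sub>0 nat) \<Rightarrow> (var \<Rightarrow>\<^sub>0 nat) \<Rightarrow> complex" where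
  "ff a m = (\<Prod>v\<in>ks m. \<Prod>t<lk m v. of_nat (lk a v - t))"

lemma mderiv_single: "mderiv m (sg a c) = sg (a - m) (c * ff a m)"
  by (cases "c = 0") (simp_all add: mderiv_def ff_def)

lemma mderiv_add: "mderiv m (p + q) = mderiv m p + mderiv m q"
  unfolding mderiv_def
  by (rule setsum_keys_plus_distrib) (simp_all add: single_add distrib_right)

lemma mderiv_zero[simp]: "mderiv m 0 = 0"
  by (simp add: mderiv_def)

lemma mderiv_const_mult: "mderiv m (const c * p) = const c * mderiv m p"
  by (induction p rule: poly_induct) (simp_all add: mderiv_single const_mult_sg mderiv_add distrib_left mult.assoc)

lemma ff_superset: "finite K \<Longrightarrow> ks m \<subseteq> K \<Longrightarrow> ff a m = (\<Prod>v\<in>K. \<Prod>t<lk m v. of_nat (lk a v - t))"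
  unfolding ff_def by (rule prod.mono_neutral_left) (auto simp: in_keys_iff)

lemma ff_zero: assumes "\<exists>v. lk a v < lk m v" shows "ff a m = 0"
proof -
  from assms obtain v where v: "lk a v < lk m v" by blast
  then have "v \<in> ks m" by (auto simp: in_keys_iff)
  moreover have "(\<Prod>t<lk m v. (of_nat (lk a v - t) :: complex)) = 0"
    using v by (auto simp: prod_zero_iff intro!: bexI[of _ "lk a v"])
  ultimately show ?thesis unfolding ff_def by (auto simp: prod_zero_iff)
qed

lemma prod_fact_nat: "(\<Prod>t<k. (k - t)) = (fact k :: nat)"
proof (induction k)
  case (Suc k)
  have "(\<Prod>t<Suc k. (Suc k - t)) = (Suc k) * (\<Prod>t<k. (k - t))"
    by (subst prod.lessThan_Suc_shift) simp
  then show ?case using Suc by simp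
qed simp

lemma prod_fact: "(\<Prod>t<k. (of_nat (k - t) :: complex)) = of_nat (fact k)"
  using arg_cong[OF prod_fact_nat[of k], of "of_nat :: nat \<Rightarrow> complex"]
  by (simp only: of_nat_prod)

lemma ff_self: "ff m m = of_nat (mfact m)"
  unfolding ff_def mfact_def of_nat_prod by (rule prod.cong[OF refl]) (rule prod_fact)

lemma lookup_minus_nat: "lk (a - b) v = lk a v - (lk b v :: nat)"
  by (rule lookup_minus)

lemma mderiv_at0: "lk (mderiv m f) 0 = lk f m * of_nat (mfact m)"
proof (induction f rule: poly_induct)
  case (2 a c)
  show ?case
  proof (cases "a = m")
    case True then show ?thesis by (simp add: mderiv_single ff_self)
  next
    case False
    show ?thesis
    proof (cases "a - m = 0")
      case True
      have "\<exists>v. lk a v < lk m v"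
      proof (rule ccontr)
        assume "\<not> ?thesis"
        then have "lk a v \<ge> lk m v" for v by (auto simp: not_less)
        moreover have "lk a v \<le> lk m v" for v
          using True by (metis lookup_minus_nat lookup_zero diff_is_0_eq)
        ultimately have "a = m" by (intro poly_mapping_eqI) (auto intro: antisym)
        with False show False by simp
      qed
      then show ?thesis using False by (simp add: mderiv_single ff_zero lookup_single)
    next
      case False2: False
      then show ?thesis using False by (simp add: mderiv_single lookup_single when_def)
    qed
  qed
qed (simp_all add: mderiv_add lookup_add distrib_right)

lemma pair_eq: "pair f g = PP f g"
proof -
  have "pair f g = (\<Sum>m\<in>ks g. lk g m * (lk f m * of_nat (mfact m)))"
    by (simp add: pair_def apply_diff_def lookup_sum lookup_const_mult mderiv_at0)
  also have "\<dots> = PP g f" by (simp add: PP_def mult.assoc)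
  finally show ?thesis by (simp add: PP_sym)
qed

lemma pd_single: "pd v (sg a c) = sg (a - ev v) (c * of_nat (lk a v))"
proof -
  have "ff a (ev v) = of_nat (lk a v)"
    by (simp add: ff_def ev_def)
  then show ?thesis by (simp add: pd_def mderiv_single ev_def)
qed

lemma pd_add: "pd v (p + q) = pd v p + pd v q" by (simp add: pd_def mderiv_add)
lemma pd_zero[simp]: "pd v 0 = 0" by (simp add: pd_def)
lemma pd_const_mult: "pd v (const c * p) = const c * pd v p" by (simp add: pd_def mderiv_const_mult)
lemma pd_uminus: "pd v (- p) = - pd v p"
  using pd_add[of v p "-p"] by (simp add: eq_neg_iff_add_eq_0 add.commute)
lemma pd_diff: "pd v (p - q) = pd v p - pd v q"
  using pd_add[of v p "-q"] pd_uminus by simp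
lemma pd_sum: "pd v (\<Sum>i\<in>A. f i) = (\<Sum>i\<in>A. pd v (f i))"
  by (induction A rule: infinite_finite_induct) (auto simp: pd_add)

lemma ev_minus_cancel: "(a + ev v) - ev v = a"
  by (rule poly_mapping_eqI) (simp add: lookup_minus_nat lookup_add ev_def lookup_single)
lemma ev_plus_minus: "lk b v > 0 \<Longrightarrow> (b - ev v) + ev v = b"
  by (rule poly_mapping_eqI) (auto simp: lookup_minus_nat lookup_add ev_def lookup_single when_def)
lemma ev_minus_plus1: "lk a v > 0 \<Longrightarrow> (a - ev v) + b = (a + b) - ev v"
  by (rule poly_mapping_eqI) (auto simp: lookup_minus_nat lookup_add ev_def lookup_single when_def)
lemma ev_minus_plus2: "lk b v > 0 \<Longrightarrow> a + (b - ev v) = (a + b) - ev v"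
  by (rule poly_mapping_eqI) (auto simp: lookup_minus_nat lookup_add ev_def lookup_single when_def)
lemma lk_ev: "lk (ev v) w = (if v = w then 1 else 0)"
  by (simp add: ev_def lookup_single)

lemma PP_pd: "PP f (pd v g) = PP (pvar v * f) g"
proof (rule bilinear_eq[where L="\<lambda>f g. PP f (pd v g)" and R="\<lambda>f g. PP (pvar v * f) g"])
  fix a c b d
  show "PP (sg a c) (pd v (sg b d)) = PP (pvar v * sg a c) (sg b d)"
  proof (cases "a + ev v = b")
    case True
    then have "b - ev v = a" "lk b v = lk a v + 1"
      using ev_minus_cancel by (auto simp: lookup_add lk_ev)
    show ?thesis unfolding True[symmetric]
      by (simp add: pd_single pvar_mult_sg PP_sg mfact_add_ev ev_minus_cancel lookup_add lk_ev algebra_simps)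
  next
    case False
    have "b - ev v \<noteq> a \<or> lk b v = 0"
      using False ev_plus_minus[of b v] by auto
    then show ?thesis using False
      by (auto simp: pd_single pvar_mult_sg PP_sg)
  qed
qed (simp_all add: PP_add1 PP_add2 pd_add distrib_left)

lemma pd_mult: "pd v (p * q) = pd v p * q + p * pd v q"
proof (rule bilinear_eq[where L="\<lambda>p q. pd v (p * q)" and R="\<lambda>p q. pd v p * q + p * pd v q"])
  fix a b :: "var \<Rightarrow>\<^sub>0 nat" and c d :: complex
  let ?A = "lk a v" and ?B = "lk b v"
  have L: "pd v (sg a c * sg b d) = sg (a + b - ev v) (c * d * (of_nat ?A + of_nat ?B))"
    by (simp add: sg_mult_sg pd_single lookup_add)
  have R: "pd v (sg a c) * sg b d + sg a c * pd v (sg b d) =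
     sg (a - ev v + b) (c * of_nat ?A * d) + sg (a + (b - ev v)) (c * (d * of_nat ?B))"
    by (simp add: sg_mult_sg pd_single)
  have "sg (a - ev v + b) (c * of_nat ?A * d) = sg (a + b - ev v) (c * of_nat ?A * d)"
    by (cases "?A = 0") (simp_all add: ev_minus_plus1)
  moreover have "sg (a + (b - ev v)) (c * (d * of_nat ?B)) = sg (a + b - ev v) (c * (d * of_nat ?B))"
    by (cases "?B = 0") (simp_all add: ev_minus_plus2)
  ultimately have "pd v (sg a c) * sg b d + sg a c * pd v (sg b d) =
     sg (a + b - ev v) (c * of_nat ?A * d + c * (d * of_nat ?B))"
    unfolding R by (simp add: single_add)
  also have "c * of_nat ?A * d + c * (d * of_nat ?B) = c * d * (of_nat ?A + of_nat ?B)"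
    by (simp add: algebra_simps)
  finally show "pd v (sg a c * sg b d) = pd v (sg a c) * sg b d + sg a c * pd v (sg b d)"
    unfolding L by simp
qed (simp_all add: pd_add distrib_left distrib_right)

lemma pvar_ev: "pvar v = sg (ev v) 1" by (simp add: pvar_def ev_def)

lemma pd_pvar: "pd v (pvar w) = (if v = w then 1 else 0)"
  by (auto simp: pvar_ev pd_single lk_ev)

lemma pd_const: "pd v (const c) = 0"
  by (simp add: const_def pd_single)

lemma pd_one[simp]: "pd v 1 = 0"
  using pd_const[of v 1] by simp

lemma const_of_nat: "const (of_nat k) = of_nat k"
  by (induction k) (simp_all add: const_add)

lemma pd_power: "pd v (p ^ Suc k) = of_nat (Suc k) * p ^ k * pd v p"
proof (induction k)
  case 0 then show ?case by (simp)
next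
  case (Suc k)
  have "pd v (p ^ Suc (Suc k)) = pd v p * p ^ Suc k + p * pd v (p ^ Suc k)"
    by (simp add: pd_mult)
  also have "\<dots> = of_nat (Suc (Suc k)) * p ^ Suc k * pd v p"
    unfolding Suc by (simp add: algebra_simps)
  finally show ?case .
qed

lemma poly_in_add: "poly_in V p \<Longrightarrow> poly_in V q \<Longrightarrow> poly_in V (p + q)"
  unfolding poly_in_def using keys_add[of p q] by auto
lemma keys_mult_elem: "x \<in> ks (p * q) \<Longrightarrow> \<exists>a b. x = a + b \<and> a \<in> ks p \<and> b \<in> ks q"
  using keys_mult[of p q] by auto
lemma poly_in_mult: "poly_in V p \<Longrightarrow> poly_in V q \<Longrightarrow> poly_in V (p * q)"
  unfolding poly_in_def
proof
  fix x assume "\<forall>m\<in>ks p. ks m \<subseteq> V" "\<forall>m\<in>ks q. ks m \<subseteq> V" "x \<in> ks (p * q)"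
  then obtain a b where "x = a + b" "a \<in> ks p" "b \<in> ks q" using keys_mult_elem by blast
  then show "ks x \<subseteq> V" using keys_add[of a b] \<open>\<forall>m\<in>ks p. ks m \<subseteq> V\<close> \<open>\<forall>m\<in>ks q. ks m \<subseteq> V\<close> by auto
qed
lemma poly_in_zero[simp]: "poly_in V 0" by (simp add: poly_in_def)
lemma poly_in_one[simp]: "poly_in V 1" by (simp add: poly_in_def)
lemma poly_in_const[simp]: "poly_in V (const c)" by (simp add: poly_in_def const_def)
lemma poly_in_pvar: "v \<in> V \<Longrightarrow> poly_in V (pvar v)" by (simp add: poly_in_def pvar_def)
lemma poly_in_uminus: "poly_in V p \<Longrightarrow> poly_in V (- p)" by (simp add: poly_in_def)
lemma poly_in_diff: "poly_in V p \<Longrightarrow> poly_in V q \<Longrightarrow> poly_in V (p - q)"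
  using poly_in_add[of V p "-q"] poly_in_uminus by simp
lemma poly_in_sum: "(\<And>i. i \<in> A \<Longrightarrow> poly_in V (f i)) \<Longrightarrow> poly_in V (\<Sum>i\<in>A. f i)"
  by (induction A rule: infinite_finite_induct) (auto intro: poly_in_add)
lemma poly_in_prod: "(\<And>i. i \<in> A \<Longrightarrow> poly_in V (f i)) \<Longrightarrow> poly_in V (\<Prod>i\<in>A. f i)"
  by (induction A rule: infinite_finite_induct) (auto intro: poly_in_mult)
lemma poly_in_power: "poly_in V p \<Longrightarrow> poly_in V (p ^ k)"
  by (induction k) (auto intro: poly_in_mult)
lemma poly_in_mono: "poly_in V p \<Longrightarrow> V \<subseteq> V' \<Longrightarrow> poly_in V' p"
  unfolding poly_in_def by blast
lemma poly_in_sg: "ks a \<subseteq> V \<Longrightarrow> poly_in V (sg a c)"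
  by (simp add: poly_in_def)
lemma poly_in_pd: assumes "poly_in V p" shows "poly_in V (pd v p)"
proof -
  have "ks (a - ev v) \<subseteq> ks a" for a
    by (auto simp: in_keys_iff lookup_minus_nat)
  then have "poly_in V (sg (a - ev v) c)" if "a \<in> ks p" for a c
    using assms that unfolding poly_in_def by auto
  then show ?thesis unfolding pd_def mderiv_def ev_def[symmetric]
    by (intro poly_in_sum) auto
qed

lemma pd_notin: assumes "poly_in V p" "v \<notin> V" shows "pd v p = 0"
proof (rule poly_induct_keys[where Q="\<lambda>a. ks a \<subseteq> V" and P="\<lambda>p. pd v p = 0"])
  fix a :: "var \<Rightarrow>\<^sub>0 nat" and c :: complex assume "ks a \<subseteq> V"
  then have "lk a v = 0" using assms(2) by (auto simp: in_keys_iff)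
  then show "pd v (sg a c) = 0" by (simp add: pd_single)
next
  show "pd v 0 = 0" by simp
next
  fix p q assume "pd v p = 0" "pd v q = 0"
  then show "pd v (p + q) = 0" by (simp add: pd_add)
next
  show "\<forall>a\<in>ks p. ks a \<subseteq> V" using assms(1) by (simp add: poly_in_def)
qed


definition mon :: "(var \<Rightarrow> mpoly) \<Rightarrow> (var \<Rightarrow>\<^sub>0 nat) \<Rightarrow> mpoly" where
  "mon \<sigma> a = (\<Prod>v\<in>ks a. \<sigma> v ^ lk a v)"

lemma subst_single: "subst \<sigma> (sg a c) = const c * mon \<sigma> a"
  by (cases "c = 0") (simp_all add: subst_def mon_def)

lemma subst_add: "subst \<sigma> (p + q) = subst \<sigma> p + subst \<sigma> q"
  unfolding subst_def mon_def[symmetric]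
  by (rule setsum_keys_plus_distrib) (simp_all add: const_add distrib_right)

lemma subst_zero[simp]: "subst \<sigma> 0 = 0" by (simp add: subst_def)

lemma mon_superset: "finite K \<Longrightarrow> ks a \<subseteq> K \<Longrightarrow> mon \<sigma> a = (\<Prod>v\<in>K. \<sigma> v ^ lk a v)"
  unfolding mon_def by (rule prod.mono_neutral_left) (auto simp: in_keys_iff)

lemma mon_add: "mon \<sigma> (a + b) = mon \<sigma> a * mon \<sigma> b"
proof -
  let ?K = "ks a \<union> ks b"
  have "mon \<sigma> (a + b) = (\<Prod>v\<in>?K. \<sigma> v ^ lk (a + b) v)"
    by (rule mon_superset) (use keys_add[of a b] in auto)
  also have "\<dots> = (\<Prod>v\<in>?K. \<sigma> v ^ lk a v) * (\<Prod>v\<in>?K. \<sigma> v ^ lk b v)"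
    by (simp add: lookup_add power_add prod.distrib)
  also have "\<dots> = mon \<sigma> a * mon \<sigma> b"
    by (simp add: mon_superset[symmetric])
  finally show ?thesis .
qed

lemma mon_zero[simp]: "mon \<sigma> 0 = 1" by (simp add: mon_def)

lemma subst_mult: "subst \<sigma> (p * q) = subst \<sigma> p * subst \<sigma> q"
proof (rule bilinear_eq[where L="\<lambda>p q. subst \<sigma> (p * q)" and R="\<lambda>p q. subst \<sigma> p * subst \<sigma> q"])
  fix a b :: "var \<Rightarrow>\<^sub>0 nat" and c d :: complex
  show "subst \<sigma> (sg a c * sg b d) = subst \<sigma> (sg a c) * subst \<sigma> (sg b d)"
    by (simp add: sg_mult_sg subst_single mon_add const_mult_const[symmetric] mult_ac)
qed (simp_all add: subst_add distrib_left distrib_right)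

lemma subst_const: "subst \<sigma> (const c) = const c"
  by (simp add: const_def subst_single)

lemma subst_one[simp]: "subst \<sigma> 1 = 1"
  using subst_const[of \<sigma> 1] by simp

lemma subst_const_mult: "subst \<sigma> (const c * p) = const c * subst \<sigma> p"
  by (simp add: subst_mult subst_const)

lemma mon_ev: "mon \<sigma> (ev v) = \<sigma> v"
  by (simp add: mon_def ev_def)

lemma subst_pvar: "subst \<sigma> (pvar v) = \<sigma> v"
  by (simp add: pvar_ev subst_single mon_ev)

lemma subst_uminus: "subst \<sigma> (- p) = - subst \<sigma> p"
  using subst_add[of \<sigma> p "-p"] by (simp add: eq_neg_iff_add_eq_0 add.commute)
lemma subst_diff: "subst \<sigma> (p - q) = subst \<sigma> p - subst \<sigma> q"
  using subst_add[of \<sigma> p "-q"] subst_uminus by simp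
lemma subst_sum: "subst \<sigma> (\<Sum>i\<in>A. f i) = (\<Sum>i\<in>A. subst \<sigma> (f i))"
  by (induction A rule: infinite_finite_induct) (auto simp: subst_add)
lemma subst_prod: "subst \<sigma> (\<Prod>i\<in>A. f i) = (\<Prod>i\<in>A. subst \<sigma> (f i))"
  by (induction A rule: infinite_finite_induct) (auto simp: subst_mult)
lemma subst_power: "subst \<sigma> (p ^ k) = subst \<sigma> p ^ k"
  by (induction k) (auto simp: subst_mult)

definition mdeg :: "(var \<Rightarrow>\<^sub>0 nat) \<Rightarrow> nat" where "mdeg a = (\<Sum>v\<in>ks a. lk a v)"

lemma mdeg_superset: "finite K \<Longrightarrow> ks a \<subseteq> K \<Longrightarrow> mdeg a = (\<Sum>v\<in>K. lk a v)"
  unfolding mdeg_def by (rule sum.mono_neutral_left) (auto simp: in_keys_iff)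

lemma mdeg_add: "mdeg (a + b) = mdeg a + mdeg b"
proof -
  let ?K = "ks a \<union> ks b"
  have "mdeg (a + b) = (\<Sum>v\<in>?K. lk (a + b) v)"
    by (rule mdeg_superset) (use keys_add[of a b] in auto)
  then show ?thesis by (simp add: lookup_add sum.distrib mdeg_superset[symmetric])
qed

lemma mdeg_ev[simp]: "mdeg (ev v) = 1" by (simp add: mdeg_def ev_def)

lemma monomial_induct:
  assumes "P 0" "\<And>a v. P a \<Longrightarrow> v \<in> V \<Longrightarrow> ks a \<subseteq> V \<Longrightarrow> P (a + ev v)"
  shows "ks a \<subseteq> V \<Longrightarrow> P a"
proof (induction "mdeg a" arbitrary: a rule: less_induct)
  case less
  show ?case
  proof (cases "a = 0")
    case True then show ?thesis using assms(1) by simp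
  next
    case False
    then obtain v where v: "v \<in> ks a" by (metis keys_eq_empty ex_in_conv)
    then have "lk a v > 0" by (simp add: in_keys_iff)
    then have a: "a = (a - ev v) + ev v" by (simp add: ev_plus_minus)
    have ks: "ks (a - ev v) \<subseteq> ks a" by (auto simp: in_keys_iff lookup_minus_nat)
    have "mdeg (a - ev v) < mdeg a"
      using arg_cong[OF a, of mdeg] by (simp add: mdeg_add)
    then have "P (a - ev v)" using less ks by auto
    then have "P ((a - ev v) + ev v)" using assms(2) v ks less.prems by auto
    then show ?thesis using a by simp
  qed
qed

lemma sg_add_ev: "sg (a + ev v) c = sg a c * pvar v"
  by (simp add: pvar_ev sg_mult_sg)


abbreviation Phi :: "nat \<Rightarrow> mpoly \<Rightarrow> mpoly" where "Phi n \<equiv> subst (phi_subst n)"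

definition Fop :: "nat \<Rightarrow> nat \<Rightarrow> mpoly \<Rightarrow> mpoly" where
  "Fop n k h = (\<Sum>i=1..n. pvar (X i) ^ k * pd (Y i) h)"

lemma Fop_add: "Fop n k (p + q) = Fop n k p + Fop n k q"
  by (simp add: Fop_def pd_add distrib_left sum.distrib)

lemma Fop_zero[simp]: "Fop n k 0 = 0" by (simp add: Fop_def)

lemma Fop_const_mult: "Fop n k (const c * p) = const c * Fop n k p"
  unfolding Fop_def pd_const_mult sum_distrib_left by (simp add: mult_ac)

lemma Fop_mult: "Fop n k (p * q) = Fop n k p * q + p * Fop n k q"
  by (simp add: Fop_def pd_mult distrib_left sum.distrib sum_distrib_left sum_distrib_right mult_ac)

lemma Phi_X: "phi_subst n (X i) = pvar (X i)" by (simp add: phi_subst_def)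
lemma Phi_Lam: "phi_subst n (Lam i) = pvar (Lam i)" by (simp add: phi_subst_def)
lemma Phi_Y: "phi_subst n (Y j) = phi n (pvar (X j))" by (simp add: phi_subst_def)

lemma pd_Lam_phi: "k \<in> {1..n-1} \<Longrightarrow> pd (Lam k) (phi n (pvar (X j))) = pvar (X j) ^ k"
proof -
  assume k: "k \<in> {1..n-1}"
  have z: "pd (Lam k) (pvar (X j) ^ l) = 0" for l
    by (rule pd_notin[where V="{X j}"]) (auto intro!: poly_in_power poly_in_pvar)
  have "pd (Lam k) (phi n (pvar (X j))) = (\<Sum>l=1..n-1. if k = l then pvar (X j) ^ l else 0)"
    unfolding phi_def pd_sum by (rule sum.cong) (simp_all add: pd_mult pd_pvar z)
  also have "\<dots> = pvar (X j) ^ k"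
    using k by (simp add: sum.delta)
  finally show ?thesis .
qed

lemma chain_rule_mono:
  assumes k: "k \<in> {1..n-1}" and a: "ks a \<subseteq> xy_vars n"
  shows "pd (Lam k) (Phi n (sg a 1)) = Phi n (Fop n k (sg a 1))"
  using a
proof (induction a rule: monomial_induct[where V="xy_vars n"])
  case 1
  then show ?case by (simp add: Fop_def)
next
  case (2 a v)
  have gen: "pd (Lam k) (Phi n (pvar v)) = Phi n (Fop n k (pvar v))"
  proof -
    from 2(2) consider (x) i where "v = X i" "i \<in> {1..n}" | (y) j where "v = Y j" "j \<in> {1..n}"
      by (auto simp: xy_vars_def)
    then show ?thesis
    proof cases
      case x
      then show ?thesis by (simp add: subst_pvar Phi_X pd_pvar Fop_def)
    next
      case y
      have "Fop n k (pvar v) = pvar (X j) ^ k"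
        using y by (simp add: Fop_def pd_pvar if_distrib sum.delta cong: if_cong)
      then show ?thesis using y k by (simp add: subst_pvar Phi_Y pd_Lam_phi subst_power Phi_X)
    qed
  qed
  show ?case
    using 2 by (simp add: sg_add_ev subst_mult subst_add pd_mult Fop_mult gen)
qed (rule a)

lemma chain_rule:
  assumes k: "k \<in> {1..n-1}" and h: "poly_in (xy_vars n) h"
  shows "pd (Lam k) (Phi n h) = Phi n (Fop n k h)"
proof (rule poly_induct_keys[where Q="\<lambda>a. ks a \<subseteq> xy_vars n" and P="\<lambda>h. pd (Lam k) (Phi n h) = Phi n (Fop n k h)"])
  fix a :: "var \<Rightarrow>\<^sub>0 nat" and c :: complex assume "ks a \<subseteq> xy_vars n"
  then have "pd (Lam k) (Phi n (sg a 1)) = Phi n (Fop n k (sg a 1))" by (rule chain_rule_mono[OF k])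
  moreover have "sg a c = const c * sg a 1" by (simp add: const_mult_sg)
  ultimately show "pd (Lam k) (Phi n (sg a c)) = Phi n (Fop n k (sg a c))"
    by (simp add: subst_const_mult pd_const_mult Fop_const_mult)
next
  fix p q assume "pd (Lam k) (Phi n p) = Phi n (Fop n k p)" "pd (Lam k) (Phi n q) = Phi n (Fop n k q)"
  then show "pd (Lam k) (Phi n (p + q)) = Phi n (Fop n k (p + q))"
    by (simp add: subst_add pd_add Fop_add)
qed (use h in \<open>simp_all add: poly_in_def\<close>)


definition NX :: "mpoly \<Rightarrow> bool" where
  "NX p \<longleftrightarrow> (\<forall>a\<in>ks p. \<not> ks a \<subseteq> range X)"

lemma keys_add_nat: "ks a \<subseteq> ks (a + (b :: var \<Rightarrow>\<^sub>0 nat))"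
  by (auto simp: in_keys_iff lookup_add)

lemma NX_mult: assumes "NX p" shows "NX (p * q)"
  unfolding NX_def
proof
  fix x assume "x \<in> ks (p * q)"
  then obtain a b where "x = a + b" "a \<in> ks p" "b \<in> ks q" using keys_mult_elem by blast
  then show "\<not> ks x \<subseteq> range X" using assms keys_add_nat[of a b] unfolding NX_def by blast
qed

lemma NX_mult2: "NX q \<Longrightarrow> NX (p * q)"
  using NX_mult[of q p] by (simp add: mult.commute)

lemma NX_add: "NX p \<Longrightarrow> NX q \<Longrightarrow> NX (p + q)"
  unfolding NX_def using keys_add[of p q] by blast

lemma NX_zero[simp]: "NX 0" by (simp add: NX_def)

lemma NX_sum: "(\<And>i. i \<in> A \<Longrightarrow> NX (f i)) \<Longrightarrow> NX (\<Sum>i\<in>A. f i)"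
  by (induction A rule: infinite_finite_induct) (auto intro: NX_add)

lemma NX_pvar: "v \<notin> range X \<Longrightarrow> NX (pvar v)"
  by (simp add: NX_def pvar_def)

lemma NX_sigma: "v \<notin> range X \<Longrightarrow> NX (phi_subst n v)"
proof (cases v)
  case (Y j)
  have "NX (pvar (Lam l) * pvar (X j) ^ l)" for l
    by (rule NX_mult) (rule NX_pvar, auto)
  then show ?thesis using Y by (simp add: phi_subst_def phi_def NX_sum)
next
  case (Lam j)
  have "NX (pvar (Lam j))" by (rule NX_pvar) auto
  then show ?thesis using Lam by (simp add: phi_subst_def)
qed auto

lemma mon_pure: assumes b: "ks b \<subseteq> range X" shows "mon (phi_subst n) b = sg b 1"
  using b
proof (induction b rule: monomial_induct[where V="range X"])
  case 1
  then show ?case by (simp add: mon_def)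
next
  case (2 a v)
  then obtain i where "v = X i" by auto
  then show ?case using 2 by (simp add: mon_add mon_ev sg_add_ev Phi_X)
qed (rule b)

lemma mon_NX: assumes "\<not> ks b \<subseteq> range X" shows "NX (mon (phi_subst n) b)"
proof -
  obtain v where v: "v \<in> ks b" "v \<notin> range X" using assms by auto
  then have "lk b v > 0" by (simp add: in_keys_iff)
  then have b: "b = (b - ev v) + ev v" by (simp add: ev_plus_minus)
  have "mon (phi_subst n) b = mon (phi_subst n) (b - ev v) * phi_subst n v"
    by (subst b) (simp add: mon_add mon_ev)
  then show ?thesis using NX_mult2[OF NX_sigma[OF v(2)]] by simp
qed

lemma Phi_lookup: assumes e: "ks e \<subseteq> range X" shows "lk (Phi n h) e = lk h e"
proof (induction h rule: poly_induct)
  case (2 b c)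
  show ?case
  proof (cases "ks b \<subseteq> range X")
    case True
    then show ?thesis by (simp add: subst_single mon_pure const_mult_sg)
  next
    case False
    then have "e \<notin> ks (mon (phi_subst n) b)" using mon_NX[OF False, of n] e by (auto simp: NX_def)
    moreover have "b \<noteq> e" using False e by auto
    ultimately show ?thesis by (simp add: subst_single lookup_const_mult in_keys_iff lookup_single)
  qed
qed (simp_all add: subst_add lookup_add)

lemma Vandermonde_poly_in: "poly_in (X ` {1..n}) (Vandermonde n)"
  unfolding Vandermonde_def
  by (rule poly_in_prod) (auto intro!: poly_in_diff poly_in_pvar)

lemma PP_Phi_Delta: "PP h (Vandermonde n) = PP (Phi n h) (Vandermonde n)"
proof -
  have "ks e \<subseteq> range X" if "e \<in> ks (Vandermonde n)" for e
    using Vandermonde_poly_in[of n] that unfolding poly_in_def by blast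
  then show ?thesis
    by (simp add: PP_superset2[of "ks (Vandermonde n)"] Phi_lookup cong: sum.cong)
qed

lemma PP_mult_pvar: "PP f (pvar v * g) = PP (pd v f) g"
  by (simp add: PP_sym[of f] PP_pd[symmetric] PP_sym[of g])

lemma PP_pd_pow: "PP f ((pd v ^^ k) g) = PP (pvar v ^ k * f) g"
  by (induction k arbitrary: f) (simp_all add: PP_pd mult_ac)

lemma PP_Eop: "PP f (Eop n k g) = PP (Fop n k f) g"
  by (simp add: Eop_def Fop_def PP_sum1 PP_sum2 PP_mult_pvar PP_pd_pow)

inductive_set Wset :: "nat \<Rightarrow> mpoly set" for n where
  W_Delta: "Vandermonde n \<in> Wset n"
| W_zero: "0 \<in> Wset n"
| W_add: "p \<in> Wset n \<Longrightarrow> q \<in> Wset n \<Longrightarrow> p + q \<in> Wset n"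
| W_smult: "p \<in> Wset n \<Longrightarrow> const c * p \<in> Wset n"
| W_dx: "p \<in> Wset n \<Longrightarrow> i \<in> {1..n} \<Longrightarrow> pd (X i) p \<in> Wset n"
| W_lam: "p \<in> Wset n \<Longrightarrow> k \<in> {1..n-1} \<Longrightarrow> pvar (Lam k) * p \<in> Wset n"

lemma poly_in_xmult: "i \<in> {1..n} \<Longrightarrow> poly_in (xy_vars n) f \<Longrightarrow> poly_in (xy_vars n) (pvar (X i) * f)"
  by (auto intro!: poly_in_mult poly_in_pvar simp: xy_vars_def)

lemma poly_in_Fop: "poly_in (xy_vars n) f \<Longrightarrow> poly_in (xy_vars n) (Fop n k f)"
  unfolding Fop_def
  by (auto intro!: poly_in_sum poly_in_mult poly_in_power poly_in_pvar poly_in_pd simp: xy_vars_def)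

lemma Phi_xmult: "Phi n (pvar (X i) * f) = pvar (X i) * Phi n f"
  by (simp add: subst_mult subst_pvar Phi_X)

lemma OP_to_W: "g \<in> OP n \<Longrightarrow> \<exists>w\<in>Wset n. \<forall>f. poly_in (xy_vars n) f \<longrightarrow> PP f g = PP (Phi n f) w"
proof (induction g rule: OP.induct)
  case OP_Delta
  then show ?case using PP_Phi_Delta W_Delta by blast
next
  case OP_zero
  then show ?case using W_zero by force
next
  case (OP_add p q)
  then obtain w1 w2 where "w1 \<in> Wset n" "w2 \<in> Wset n"
    "\<forall>f. poly_in (xy_vars n) f \<longrightarrow> PP f p = PP (Phi n f) w1"
    "\<forall>f. poly_in (xy_vars n) f \<longrightarrow> PP f q = PP (Phi n f) w2" by blast
  then show ?case by (intro bexI[of _ "w1 + w2"]) (auto simp: PP_add2 intro: W_add)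
next
  case (OP_smult p c)
  then obtain w where "w \<in> Wset n" "\<forall>f. poly_in (xy_vars n) f \<longrightarrow> PP f p = PP (Phi n f) w" by blast
  then show ?case by (intro bexI[of _ "const c * w"]) (auto simp: PP_smult2 intro: W_smult)
next
  case (OP_dx p i)
  then obtain w where w: "w \<in> Wset n" "\<forall>f. poly_in (xy_vars n) f \<longrightarrow> PP f p = PP (Phi n f) w" by blast
  show ?case
  proof (intro bexI[of _ "pd (X i) w"] allI impI)
    fix f assume f: "poly_in (xy_vars n) f"
    have "PP f (pd (X i) p) = PP (pvar (X i) * f) p" by (rule PP_pd)
    also have "\<dots> = PP (Phi n (pvar (X i) * f)) w" using w(2) poly_in_xmult[OF OP_dx(2) f] by blast
    also have "\<dots> = PP (Phi n f) (pd (X i) w)" by (simp add: Phi_xmult PP_pd)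
    finally show "PP f (pd (X i) p) = PP (Phi n f) (pd (X i) w)" .
  qed (use w OP_dx in \<open>auto intro: W_dx\<close>)
next
  case (OP_E p k)
  then obtain w where w: "w \<in> Wset n" "\<forall>f. poly_in (xy_vars n) f \<longrightarrow> PP f p = PP (Phi n f) w" by blast
  show ?case
  proof (intro bexI[of _ "pvar (Lam k) * w"] allI impI)
    fix f assume f: "poly_in (xy_vars n) f"
    have "PP f (Eop n k p) = PP (Fop n k f) p" by (rule PP_Eop)
    also have "\<dots> = PP (Phi n (Fop n k f)) w" using w(2) poly_in_Fop[OF f] by blast
    also have "\<dots> = PP (pd (Lam k) (Phi n f)) w" using chain_rule[OF OP_E(2) f] by simp
    also have "\<dots> = PP (Phi n f) (pvar (Lam k) * w)" by (simp add: PP_mult_pvar)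
    finally show "PP f (Eop n k p) = PP (Phi n f) (pvar (Lam k) * w)" .
  qed (use w OP_E in \<open>auto intro: W_lam\<close>)
qed

lemma W_to_OP: "w \<in> Wset n \<Longrightarrow> \<exists>g\<in>OP n. \<forall>f. poly_in (xy_vars n) f \<longrightarrow> PP f g = PP (Phi n f) w"
proof (induction w rule: Wset.induct)
  case W_Delta
  then show ?case using PP_Phi_Delta OP_Delta by blast
next
  case W_zero
  then show ?case using OP_zero by force
next
  case (W_add p q)
  then obtain w1 w2 where "w1 \<in> OP n" "w2 \<in> OP n"
    "\<forall>f. poly_in (xy_vars n) f \<longrightarrow> PP f w1 = PP (Phi n f) p"
    "\<forall>f. poly_in (xy_vars n) f \<longrightarrow> PP f w2 = PP (Phi n f) q" by blast
  then show ?case by (intro bexI[of _ "w1 + w2"]) (auto simp: PP_add2 intro: OP_add)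
next
  case (W_smult p c)
  then obtain w where "w \<in> OP n" "\<forall>f. poly_in (xy_vars n) f \<longrightarrow> PP f w = PP (Phi n f) p" by blast
  then show ?case by (intro bexI[of _ "const c * w"]) (auto simp: PP_smult2 intro: OP_smult)
next
  case (W_dx p i)
  then obtain w where w: "w \<in> OP n" "\<forall>f. poly_in (xy_vars n) f \<longrightarrow> PP f w = PP (Phi n f) p" by blast
  show ?case
  proof (intro bexI[of _ "pd (X i) w"] allI impI)
    fix f assume f: "poly_in (xy_vars n) f"
    have "PP f (pd (X i) w) = PP (pvar (X i) * f) w" by (rule PP_pd)
    also have "\<dots> = PP (Phi n (pvar (X i) * f)) p" using w(2) poly_in_xmult[OF W_dx(2) f] by blast
    also have "\<dots> = PP (Phi n f) (pd (X i) p)" by (simp add: Phi_xmult PP_pd)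
    finally show "PP f (pd (X i) w) = PP (Phi n f) (pd (X i) p)" .
  qed (use w W_dx in \<open>auto intro: OP_dx\<close>)
next
  case (W_lam p k)
  then obtain w where w: "w \<in> OP n" "\<forall>f. poly_in (xy_vars n) f \<longrightarrow> PP f w = PP (Phi n f) p" by blast
  show ?case
  proof (intro bexI[of _ "Eop n k w"] allI impI)
    fix f assume f: "poly_in (xy_vars n) f"
    have "PP f (Eop n k w) = PP (Fop n k f) w" by (rule PP_Eop)
    also have "\<dots> = PP (Phi n (Fop n k f)) p" using w(2) poly_in_Fop[OF f] by blast
    also have "\<dots> = PP (pd (Lam k) (Phi n f)) p" using chain_rule[OF W_lam(2) f] by simp
    also have "\<dots> = PP (Phi n f) (pvar (Lam k) * p)" by (simp add: PP_mult_pvar)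
    finally show "PP f (Eop n k w) = PP (Phi n f) (pvar (Lam k) * p)" .
  qed (use w W_lam in \<open>auto intro: OP_E\<close>)
qed

lemma orth_iff_W:
  assumes "poly_in (xy_vars n) f"
  shows "f \<in> orth (OP n) \<longleftrightarrow> (\<forall>w\<in>Wset n. PP (Phi n f) w = 0)"
proof
  assume "f \<in> orth (OP n)"
  then have o: "\<forall>g\<in>OP n. PP f g = 0" by (simp add: orth_def pair_eq)
  show "\<forall>w\<in>Wset n. PP (Phi n f) w = 0"
  proof
    fix w assume "w \<in> Wset n"
    from W_to_OP[OF this] obtain g where "g \<in> OP n" "PP f g = PP (Phi n f) w" using assms by blast
    then show "PP (Phi n f) w = 0" using o by simp
  qed
next
  assume o: "\<forall>w\<in>Wset n. PP (Phi n f) w = 0"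
  show "f \<in> orth (OP n)" unfolding orth_def pair_eq
  proof (safe)
    fix g assume "g \<in> OP n"
    from OP_to_W[OF this] obtain w where "w \<in> Wset n" "PP f g = PP (Phi n f) w" using assms by blast
    then show "PP f g = 0" using o by simp
  qed
qed


definition Gk :: "nat \<Rightarrow> mpoly fps" where "Gk j = Abs_fps (\<lambda>m. pvar (X j) ^ m)"
definition Lk :: "nat \<Rightarrow> mpoly fps" where "Lk j = 1 - fps_const (pvar (X j)) * fps_X"
definition Hf :: "nat \<Rightarrow> mpoly fps" where "Hf k = (\<Prod>j\<in>{1..k}. Gk j)"
definition Ef :: "nat \<Rightarrow> mpoly fps" where "Ef n = (\<Prod>j\<in>{1..n}. Lk j)"
definition hh :: "nat \<Rightarrow> nat \<Rightarrow> mpoly" where "hh k m = fps_nth (Hf k) m"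

lemma Gk_Lk: "Gk j * Lk j = 1"
proof (rule fps_ext)
  fix m
  have "Gk j * Lk j = Gk j - fps_const (pvar (X j)) * (fps_X * Gk j)"
    by (simp add: Lk_def algebra_simps)
  then show "fps_nth (Gk j * Lk j) m = fps_nth 1 m"
    by (cases m) (simp_all add: Gk_def fps_X_mult_nth)
qed

lemma Ef_Hf: "Ef n * Hf n = 1"
  by (simp add: Ef_def Hf_def prod.distrib[symmetric] mult.commute[of "Lk _"] Gk_Lk)

lemma prod_const_X: "finite B \<Longrightarrow> (\<Prod>j\<in>B. fps_const (x j) * fps_X) = fps_const (\<Prod>j\<in>B. x j) * (fps_X :: mpoly fps) ^ card B"
  by (induction B rule: finite_induct) (simp_all add: mult_ac flip: fps_const_mult)

lemma fps_const_sign: "fps_const ((-1)^k * p) = (-1)^k * fps_const (p::'a::comm_ring_1)"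
  by (induction k) (simp_all flip: fps_const_mult fps_const_neg)

lemma esym_empty: "esym n 0 = 1"
proof -
  have "{S. S \<subseteq> {1..n} \<and> card S = 0} = {{}}" by (auto dest: finite_subset)
  then show ?thesis by (simp add: esym_def)
qed

lemma esym_big: "i > n \<Longrightarrow> esym n i = 0"
proof -
  assume i: "i > n"
  have e: "{S. S \<subseteq> {1..n} \<and> card S = i} = {}"
  proof (safe)
    fix S assume "S \<subseteq> {1..n}" "i = card S"
    then have "card S \<le> n" using card_mono[of "{1..n}" S] by simp
    then show "S \<in> {}" using i \<open>i = card S\<close> by simp
  qed
  show ?thesis unfolding esym_def e by simp
qed

lemma Ef_nth: "fps_nth (Ef n) i = (-1) ^ i * esym n i"
proof -
  have "Ef n = (\<Prod>j\<in>{1..n}. 1 - fps_const (pvar (X j)) * fps_X)" by (simp add: Ef_def Lk_def)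
  also have "\<dots> = (\<Sum>B\<in>Pow {1..n}. (- 1) ^ card B * (\<Prod>j\<in>B. fps_const (pvar (X j)) * fps_X) * (\<Prod>j\<in>{1..n} - B. 1))"
    by (rule prod_diff_conv_sum) simp
  also have "\<dots> = (\<Sum>B\<in>Pow {1..n}. fps_const ((- 1) ^ card B * (\<Prod>j\<in>B. pvar (X j))) * fps_X ^ card B)"
    by (rule sum.cong) (auto simp: prod_const_X finite_subset fps_const_sign)
  finally have "fps_nth (Ef n) i = (\<Sum>B\<in>Pow {1..n}. if card B = i then (- 1) ^ i * (\<Prod>j\<in>B. pvar (X j)) else 0)"
    by (simp add: fps_sum_nth fps_X_power_mult_right_nth cong: if_cong) (rule sum.cong, auto)
  also have "\<dots> = (\<Sum>B\<in>{B\<in>Pow {1..n}. card B = i}. (- 1) ^ i * (\<Prod>j\<in>B. pvar (X j)))"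
    by (subst sum.inter_filter[symmetric]) (simp_all add: Pow_def)
  also have "\<dots> = (-1) ^ i * esym n i"
    by (simp add: esym_def sum_distrib_left Pow_def conj_commute)
  finally show ?thesis .
qed

lemma fps_nth_prod0: "fps_nth (\<Prod>j\<in>A. f j) 0 = (\<Prod>j\<in>A. fps_nth (f j) 0)"
  by (induction A rule: infinite_finite_induct) simp_all

lemma hh_0[simp]: "hh k 0 = 1"
  by (simp add: hh_def Hf_def fps_nth_prod0 Gk_def)

lemma Hf_Suc: "Hf (Suc k) = Hf k * Gk (Suc k)"
proof -
  have "{1..Suc k} = insert (Suc k) {1..k}" by auto
  then show ?thesis by (simp add: Hf_def mult.commute)
qed

lemma hh_Suc: "hh (Suc k) m = (\<Sum>i=0..m. hh k i * pvar (X (Suc k)) ^ (m - i))"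
  by (simp add: hh_def Hf_Suc fps_mult_nth Gk_def)

lemma hh_poly_in: "poly_in (X ` {1..k}) (hh k m)"
proof (induction k arbitrary: m)
  case 0
  then show ?case by (cases m) (simp_all add: hh_def Hf_def)
next
  case (Suc k)
  have "poly_in (X ` {1..Suc k}) (hh k i * pvar (X (Suc k)) ^ (m - i))" for i
    by (intro poly_in_mult poly_in_power poly_in_pvar poly_in_mono[OF Suc.IH]) auto
  then show ?case by (simp add: hh_Suc poly_in_sum)
qed

lemma hh_rec: "m \<ge> 1 \<Longrightarrow> hh k m = hh (Suc k) m - pvar (X (Suc k)) * hh (Suc k) (m - 1)"
proof -
  assume m: "m \<ge> 1"
  have "Hf (Suc k) * Lk (Suc k) = Hf k" by (simp add: Hf_Suc mult.assoc Gk_Lk)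
  then have "hh k m = fps_nth (Hf (Suc k) * Lk (Suc k)) m" by (simp add: hh_def)
  also have "Hf (Suc k) * Lk (Suc k) = Hf (Suc k) - fps_const (pvar (X (Suc k))) * (fps_X * Hf (Suc k))"
    by (simp add: Lk_def algebra_simps)
  finally show ?thesis using m by (simp add: fps_X_mult_nth hh_def)
qed

lemma newton: "m \<ge> 1 \<Longrightarrow> (\<Sum>i=0..m. (-1) ^ i * esym n i * hh n (m - i)) = 0"
proof -
  assume m: "m \<ge> 1"
  have "fps_nth (Ef n * Hf n) m = 0" using m by (simp add: Ef_Hf)
  then show ?thesis by (simp add: fps_mult_nth Ef_nth hh_def)
qed


lemma J_zero: "in_esym_ideal n 0"
  unfolding in_esym_ideal_def by (rule exI[of _ "\<lambda>_. 0"]) simp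

lemma J_add: "in_esym_ideal n p \<Longrightarrow> in_esym_ideal n p' \<Longrightarrow> in_esym_ideal n (p + p')"
  unfolding in_esym_ideal_def
proof (elim exE conjE)
  fix q q' assume "\<forall>i\<in>{1..n}. poly_in (xlam_vars n) (q i)" "p = (\<Sum>i = 1..n. q i * esym n i)"
    "\<forall>i\<in>{1..n}. poly_in (xlam_vars n) (q' i)" "p' = (\<Sum>i = 1..n. q' i * esym n i)"
  then show "\<exists>q. (\<forall>i\<in>{1..n}. poly_in (xlam_vars n) (q i)) \<and> p + p' = (\<Sum>i = 1..n. q i * esym n i)"
    by (intro exI[of _ "\<lambda>i. q i + q' i"]) (simp add: poly_in_add sum.distrib distrib_right)
qed

lemma J_mult: "poly_in (xlam_vars n) r \<Longrightarrow> in_esym_ideal n p \<Longrightarrow> in_esym_ideal n (r * p)"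
  unfolding in_esym_ideal_def
proof (elim exE conjE)
  fix q assume "poly_in (xlam_vars n) r" "\<forall>i\<in>{1..n}. poly_in (xlam_vars n) (q i)" "p = (\<Sum>i = 1..n. q i * esym n i)"
  then show "\<exists>q. (\<forall>i\<in>{1..n}. poly_in (xlam_vars n) (q i)) \<and> r * p = (\<Sum>i = 1..n. q i * esym n i)"
    by (intro exI[of _ "\<lambda>i. r * q i"]) (simp add: poly_in_mult sum_distrib_left mult.assoc)
qed

lemma J_gen: assumes "i \<in> {1..n}" "poly_in (xlam_vars n) r" shows "in_esym_ideal n (r * esym n i)"
  unfolding in_esym_ideal_def
proof (intro exI[of _ "\<lambda>j. if j = i then r else 0"] conjI)
  have "(\<Sum>j=1..n. (if j = i then r else 0) * esym n j) = (\<Sum>j=1..n. if j = i then r * esym n j else 0)"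
    by (rule sum.cong) auto
  also have "\<dots> = r * esym n i" using assms(1) by (simp add: sum.delta)
  finally show "r * esym n i = (\<Sum>j=1..n. (if j = i then r else 0) * esym n j)" by simp
qed (use assms in auto)


lemma J_uminus': "in_esym_ideal n p \<Longrightarrow> in_esym_ideal n (- p)"
proof -
  assume "in_esym_ideal n p"
  then have "in_esym_ideal n (const (-1) * p)" by (rule J_mult[OF poly_in_const])
  moreover have "const (-1) * p = - p"
    by (rule poly_mapping_eqI) (simp add: lookup_const_mult)
  ultimately show ?thesis by simp
qed

lemma J_diff: "in_esym_ideal n p \<Longrightarrow> in_esym_ideal n p' \<Longrightarrow> in_esym_ideal n (p - p')"
  using J_add[of n p "- p'"] J_uminus' by simp

lemma J_sum: "(\<And>i. i \<in> A \<Longrightarrow> in_esym_ideal n (f i)) \<Longrightarrow> in_esym_ideal n (\<Sum>i\<in>A. f i)"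
  by (induction A rule: infinite_finite_induct) (auto intro: J_add J_zero)

lemma X_xlam: "X ` {1..n} \<subseteq> xlam_vars n" by (auto simp: xlam_vars_def)

lemma hh_xlam: "k \<le> n \<Longrightarrow> poly_in (xlam_vars n) (hh k m)"
  by (rule poly_in_mono[OF hh_poly_in]) (auto simp: xlam_vars_def)

lemma hh_n_J: assumes "m \<ge> 1" shows "in_esym_ideal n (hh n m)"
proof -
  have "(\<Sum>i=0..m. (-1) ^ i * esym n i * hh n (m - i)) = 0" using newton[OF assms] .
  moreover have "(\<Sum>i=0..m. (-1) ^ i * esym n i * hh n (m - i)) =
      hh n m + (\<Sum>i=Suc 0..m. (-1) ^ i * esym n i * hh n (m - i))"
    by (subst sum.atLeast_Suc_atMost) (simp_all add: esym_empty)
  ultimately have e: "hh n m = - (\<Sum>i=Suc 0..m. (-1) ^ i * esym n i * hh n (m - i))"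
    by (simp add: eq_neg_iff_add_eq_0)
  have "in_esym_ideal n ((-1) ^ i * esym n i * hh n (m - i))" if "i \<in> {Suc 0..m}" for i
  proof (cases "i \<le> n")
    case True
    have "poly_in (xlam_vars n) ((-1) ^ i * hh n (m - i))"
      by (intro poly_in_mult poly_in_power hh_xlam) (auto simp: poly_in_uminus)
    then have "in_esym_ideal n (((-1) ^ i * hh n (m - i)) * esym n i)"
      using True that by (intro J_gen) auto
    then show ?thesis by (simp add: mult_ac)
  next
    case False
    then show ?thesis by (simp add: esym_big J_zero)
  qed
  then show ?thesis unfolding e by (intro J_uminus' J_sum) auto
qed

lemma hh_J: "1 \<le> k \<Longrightarrow> k \<le> n \<Longrightarrow> m \<ge> n - k + 1 \<Longrightarrow> in_esym_ideal n (hh k m)"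
proof (induction "n - k" arbitrary: k m)
  case 0
  then have "k = n" by simp
  then show ?case using 0 hh_n_J by simp
next
  case (Suc d)
  then have k: "Suc k \<le> n" "d = n - Suc k" by auto
  have "in_esym_ideal n (hh (Suc k) m)" using Suc k by auto
  moreover have "in_esym_ideal n (hh (Suc k) (m - 1))" using Suc k by auto
  ultimately have "in_esym_ideal n (hh (Suc k) m - pvar (X (Suc k)) * hh (Suc k) (m - 1))"
    using k by (intro J_diff J_mult poly_in_pvar) (auto simp: xlam_vars_def)
  then show ?case using hh_rec[of m k] Suc by simp
qed

definition artin :: "nat \<Rightarrow> (var \<Rightarrow>\<^sub>0 nat) \<Rightarrow> bool" where
  "artin n a \<longleftrightarrow> (\<forall>j\<in>{1..n}. lk a (X j) \<le> n - j)"

definition NF :: "nat \<Rightarrow> mpoly \<Rightarrow> bool" where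
  "NF n p \<longleftrightarrow> (\<exists>r q. p = r + q \<and> poly_in (xlam_vars n) r \<and> (\<forall>a\<in>ks r. artin n a) \<and> in_esym_ideal n q)"

lemma NF_add: "NF n p \<Longrightarrow> NF n p' \<Longrightarrow> NF n (p + p')"
  unfolding NF_def
proof (elim exE conjE)
  fix r q r' q' assume *: "p = r + q" "poly_in (xlam_vars n) r" "\<forall>a\<in>ks r. artin n a" "in_esym_ideal n q"
    "p' = r' + q'" "poly_in (xlam_vars n) r'" "\<forall>a\<in>ks r'. artin n a" "in_esym_ideal n q'"
  have "\<forall>a\<in>ks (r + r'). artin n a" using *(3,7) keys_add[of r r'] by blast
  then show "\<exists>r q. p + p' = r + q \<and> poly_in (xlam_vars n) r \<and> (\<forall>a\<in>ks r. artin n a) \<and> in_esym_ideal n q"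
    using * by (intro exI[of _ "r + r'"] exI[of _ "q + q'"]) (simp add: poly_in_add J_add add_ac)
qed

lemma NF_uminus: "NF n p \<Longrightarrow> NF n (- p)"
  unfolding NF_def
proof (elim exE conjE)
  fix r q assume *: "p = r + q" "poly_in (xlam_vars n) r" "\<forall>a\<in>ks r. artin n a" "in_esym_ideal n q"
  then show "\<exists>r q. - p = r + q \<and> poly_in (xlam_vars n) r \<and> (\<forall>a\<in>ks r. artin n a) \<and> in_esym_ideal n q"
    by (intro exI[of _ "- r"] exI[of _ "- q"]) (simp add: poly_in_uminus J_uminus')
qed

lemma NF_diff: "NF n p \<Longrightarrow> NF n p' \<Longrightarrow> NF n (p - p')"
  using NF_add[of n p "- p'"] NF_uminus by simp

lemma NF_J: "in_esym_ideal n q \<Longrightarrow> NF n q"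
  unfolding NF_def by (intro exI[of _ 0] exI[of _ q]) simp

lemma NF_zero: "NF n 0" using NF_J J_zero by blast

lemma NF_sum: "(\<And>i. i \<in> A \<Longrightarrow> NF n (f i)) \<Longrightarrow> NF n (\<Sum>i\<in>A. f i)"
  by (induction A rule: infinite_finite_induct) (auto intro: NF_add NF_zero)

lemma NF_artin: "ks a \<subseteq> xlam_vars n \<Longrightarrow> artin n a \<Longrightarrow> NF n (sg a c)"
  unfolding NF_def by (intro exI[of _ "sg a c"] exI[of _ 0]) (auto simp: poly_in_sg J_zero)

lemma NF_keys:
  assumes "\<And>b c. Q b \<Longrightarrow> NF n (sg b c)" "\<forall>b\<in>ks p. Q b"
  shows "NF n p"
  by (rule poly_induct_keys[where Q=Q and P="NF n"]) (use assms in \<open>auto intro: NF_zero NF_add\<close>)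

lemma pvar_power: "pvar v ^ d = sg (sg v d) 1"
proof (induction d)
  case (Suc d)
  then show ?case by (simp add: pvar_ev sg_mult_sg ev_def single_add[symmetric])
qed simp


lemma lk_sg: "lk (sg v d) w = (if v = w then d else 0)"
  by (simp add: lookup_single)

lemma reduce_step:
  assumes kn: "Suc k \<le> n"
    and IHk: "\<And>a c. ks a \<subseteq> xlam_vars n \<Longrightarrow> (\<forall>j\<in>{k<..n}. lk a (X j) \<le> n - j) \<Longrightarrow> NF n (sg a c)"
  shows "ks a \<subseteq> xlam_vars n \<Longrightarrow> (\<forall>j\<in>{Suc k<..n}. lk a (X j) \<le> n - j) \<Longrightarrow> NF n (sg a c)"
proof (induction "lk a (X (Suc k))" arbitrary: a c rule: less_induct)
  case less
  define kk where "kk = Suc k"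
  define t where "t = lk a (X kk)"
  define d where "d = n - k"
  have kk: "1 \<le> kk" "kk \<le> n" "d = n - kk + 1" using kn by (auto simp: kk_def d_def)
  show ?case
  proof (cases "t \<le> n - kk")
    case True
    have "\<forall>j\<in>{k<..n}. lk a (X j) \<le> n - j"
    proof
      fix j assume j: "j \<in> {k<..n}"
      show "lk a (X j) \<le> n - j"
      proof (cases "j = kk")
        case True then show ?thesis using \<open>t \<le> n - kk\<close> by (simp add: t_def)
      next
        case False then show ?thesis using less.prems(2) j by (auto simp: kk_def)
      qed
    qed
    then show ?thesis using IHk less.prems(1) by blast
  next
    case False
    then have td: "t \<ge> d" using kk by simp
    define a' where "a' = a - sg (X kk) d"
    have a: "a = a' + sg (X kk) d"
      by (rule poly_mapping_eqI) (use td in \<open>auto simp: a'_def lookup_add lookup_minus_nat lk_sg t_def\<close>)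
    have ks_a': "ks a' \<subseteq> ks a" by (auto simp: a'_def in_keys_iff lookup_minus_nat)
    have sgA: "sg a c = sg a' c * pvar (X kk) ^ d"
      by (subst a) (simp add: pvar_power sg_mult_sg)
    have hsum: "hh kk d = pvar (X kk) ^ d + (\<Sum>i=Suc 0..d. hh k i * pvar (X kk) ^ (d - i))"
      unfolding kk_def hh_Suc by (subst sum.atLeast_Suc_atMost) simp_all
    have eq: "sg a c = sg a' c * hh kk d - (\<Sum>i=Suc 0..d. sg a' c * (hh k i * pvar (X kk) ^ (d - i)))"
      unfolding sgA hsum by (simp add: algebra_simps sum_distrib_left)
    have xa': "poly_in (xlam_vars n) (sg a' c)"
      using ks_a' less.prems(1) by (intro poly_in_sg) auto
    have N1: "NF n (sg a' c * hh kk d)"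
      by (intro NF_J J_mult xa' hh_J) (use kk in auto)
    have N2: "NF n (sg a' c * (hh k i * pvar (X kk) ^ (d - i)))" if i: "i \<in> {Suc 0..d}" for i
    proof -
      define b1 where "b1 = a' + sg (X kk) (d - i)"
      have T1: "sg a' c * pvar (X kk) ^ (d - i) = sg b1 c"
        by (simp add: b1_def pvar_power sg_mult_sg)
      have "sg a' c * (hh k i * pvar (X kk) ^ (d - i)) = sg a' c * (pvar (X kk) ^ (d - i) * hh k i)"
        by (simp only: mult.commute[of "hh k i"])
      also have "\<dots> = (sg a' c * pvar (X kk) ^ (d - i)) * hh k i"
        by (simp only: mult.assoc)
      finally have T: "sg a' c * (hh k i * pvar (X kk) ^ (d - i)) = sg b1 c * hh k i"
        unfolding T1 .
      show ?thesis unfolding T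
      proof (rule NF_keys[where Q="\<lambda>b. ks b \<subseteq> xlam_vars n \<and> (\<forall>j\<in>{Suc k<..n}. lk b (X j) \<le> n - j) \<and> lk b (X (Suc k)) < lk a (X (Suc k))"])
        fix b c' assume "ks b \<subseteq> xlam_vars n \<and> (\<forall>j\<in>{Suc k<..n}. lk b (X j) \<le> n - j) \<and> lk b (X (Suc k)) < lk a (X (Suc k))"
        then show "NF n (sg b c')" using less.hyps by blast
      next
        show "\<forall>b\<in>ks (sg b1 c * hh k i). ks b \<subseteq> xlam_vars n \<and> (\<forall>j\<in>{Suc k<..n}. lk b (X j) \<le> n - j) \<and> lk b (X (Suc k)) < lk a (X (Suc k))"
        proof
          fix b assume "b \<in> ks (sg b1 c * hh k i)"
          then obtain x e where be: "b = x + e" "x \<in> ks (sg b1 c)" "e \<in> ks (hh k i)"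
            using keys_mult_elem by blast
          then have x: "x = b1" by (cases "c = 0") auto
          have e: "ks e \<subseteq> X ` {1..k}" using be(3) hh_poly_in[of k i] by (auto simp: poly_in_def)
          have e0: "lk e (X j) = 0" if "j > k" for j
          proof -
            have "X j \<notin> ks e" using e that by auto
            then show ?thesis by (simp add: in_keys_iff)
          qed
          have "lk b (X kk) = t - i"
            using e0[of kk] td i by (simp add: be x b1_def lookup_add a'_def lookup_minus_nat lk_sg t_def kk_def)
          then have 1: "lk b (X (Suc k)) < lk a (X (Suc k))"
            using i td kk by (simp add: t_def kk_def)
          have 2: "\<forall>j\<in>{Suc k<..n}. lk b (X j) \<le> n - j"
          proof
            fix j assume j: "j \<in> {Suc k<..n}"
            have "lk b (X j) = lk a (X j)"
              using e0[of j] j by (simp add: be x b1_def lookup_add a'_def lookup_minus_nat lk_sg kk_def)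
            then show "lk b (X j) \<le> n - j" using less.prems(2) j by simp
          qed
          have ks_b1: "ks b1 \<subseteq> ks a \<union> {X kk}"
          proof
            fix x assume "x \<in> ks b1"
            then have "x \<in> ks a' \<or> x \<in> ks (sg (X kk) (d - i))"
              using keys_add[of a' "sg (X kk) (d - i)"] by (auto simp: b1_def)
            then show "x \<in> ks a \<union> {X kk}" using ks_a' by (auto split: if_splits)
          qed
          have "X kk \<in> xlam_vars n" using kk by (auto simp: xlam_vars_def)
          then have s1: "ks b1 \<subseteq> xlam_vars n" using ks_b1 less.prems(1) by blast
          have "X ` {1..k} \<subseteq> xlam_vars n" using kn by (auto simp: xlam_vars_def)
          then have s2: "ks e \<subseteq> xlam_vars n" using e by blast
          have 3: "ks b \<subseteq> xlam_vars n"
            using keys_add[of b1 e] s1 s2 by (auto simp: x be)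
          show "ks b \<subseteq> xlam_vars n \<and> (\<forall>j\<in>{Suc k<..n}. lk b (X j) \<le> n - j) \<and> lk b (X (Suc k)) < lk a (X (Suc k))"
            using 1 2 3 by blast
        qed
      qed
    qed
    show ?thesis unfolding eq by (intro NF_diff N1 NF_sum N2)
  qed
qed

lemma reduce_all: "k \<le> n \<Longrightarrow> ks a \<subseteq> xlam_vars n \<Longrightarrow> (\<forall>j\<in>{k<..n}. lk a (X j) \<le> n - j) \<Longrightarrow> NF n (sg a c)"
proof (induction k arbitrary: a c)
  case 0
  then have "artin n a" by (auto simp: artin_def)
  then show ?case using 0 by (intro NF_artin) auto
next
  case (Suc k)
  show ?case by (rule reduce_step[OF Suc.prems(1)]) (use Suc in auto)
qed

lemma NF_all: "poly_in (xlam_vars n) p \<Longrightarrow> NF n p"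
  by (rule NF_keys[where Q="\<lambda>b. ks b \<subseteq> xlam_vars n"]) (auto intro: reduce_all[of n n] simp: poly_in_def)


definition gt_lex :: "nat \<Rightarrow> (var \<Rightarrow>\<^sub>0 nat) \<Rightarrow> (var \<Rightarrow>\<^sub>0 nat) \<Rightarrow> bool" where
  "gt_lex n a b \<longleftrightarrow> (\<exists>k\<in>{1..n}. lk a (X k) > lk b (X k) \<and> (\<forall>j\<in>{k<..n}. lk a (X j) = lk b (X j)))"

lemma gt_irrefl: "\<not> gt_lex n a a"
  by (auto simp: gt_lex_def)

lemma gt_add: "gt_lex n a b \<Longrightarrow> gt_lex n (a + c) (b + c)"
  by (auto simp: gt_lex_def lookup_add)

lemma gt_add2: "gt_lex n a b \<Longrightarrow> gt_lex n (c + a) (c + b)"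
  using gt_add[of n a b c] by (simp add: add.commute)

lemma gt_trans: assumes "gt_lex n a b" "gt_lex n b c" shows "gt_lex n a c"
proof -
  from assms(1) obtain k where k: "k \<in> {1..n}" "lk a (X k) > lk b (X k)" "\<forall>j\<in>{k<..n}. lk a (X j) = lk b (X j)"
    by (auto simp: gt_lex_def)
  from assms(2) obtain l where l: "l \<in> {1..n}" "lk b (X l) > lk c (X l)" "\<forall>j\<in>{l<..n}. lk b (X j) = lk c (X j)"
    by (auto simp: gt_lex_def)
  show ?thesis
  proof (cases "k \<le> l")
    case True
    show ?thesis unfolding gt_lex_def
    proof (intro bexI[of _ l] conjI ballI)
      show "lk c (X l) < lk a (X l)"
        using k l True by (cases "k = l") auto
      show "lk a (X j) = lk c (X j)" if "j \<in> {l<..n}" for j using k l True that by auto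
    qed (use l in auto)
  next
    case False
    show ?thesis unfolding gt_lex_def
    proof (intro bexI[of _ k] conjI ballI)
      show "lk c (X k) < lk a (X k)" using k l False by auto
      show "lk a (X j) = lk c (X j)" if "j \<in> {k<..n}" for j using k l False that by auto
    qed (use k in auto)
  qed
qed

lemma lk_zero_if_gt: assumes "\<forall>e\<in>ks r. gt_lex n e w" shows "lk r w = 0"
proof (rule ccontr)
  assume "lk r w \<noteq> 0"
  then have "w \<in> ks r" by (simp add: in_keys_iff)
  then show False using assms gt_irrefl by blast
qed

lemma keys_gt_mult:
  assumes "\<forall>e\<in>ks p. gt_lex n e u" "\<forall>e\<in>ks q. e = v \<or> gt_lex n e v"
  shows "\<forall>e\<in>ks (p * q). gt_lex n e (u + v)"
proof
  fix e assume "e \<in> ks (p * q)"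
  then obtain e1 e2 where e: "e = e1 + e2" "e1 \<in> ks p" "e2 \<in> ks q" using keys_mult_elem by blast
  have 1: "gt_lex n (e1 + e2) (u + e2)" using assms(1) e gt_add by blast
  show "gt_lex n e (u + v)"
  proof (cases "e2 = v")
    case True then show ?thesis using 1 e by simp
  next
    case False
    then have "gt_lex n (u + e2) (u + v)" using assms(2) e gt_add2 by blast
    then show ?thesis using 1 e gt_trans by blast
  qed
qed

definition mintermP :: "nat \<Rightarrow> mpoly \<Rightarrow> (var \<Rightarrow>\<^sub>0 nat) \<Rightarrow> bool" where
  "mintermP n p u \<longleftrightarrow> lk p u = 1 \<and> (\<forall>e\<in>ks p. e = u \<or> gt_lex n e u)"

lemma MT:
  assumes p: "mintermP n p u" and q: "mintermP n q v"
  shows "mintermP n (p * q) (u + v)"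
proof -
  define p' where "p' = p - sg u 1"
  define q' where "q' = q - sg v 1"
  have kp': "\<forall>e\<in>ks p'. gt_lex n e u"
  proof
    fix e assume "e \<in> ks p'"
    then have "lk p e \<noteq> (if u = e then 1 else 0)" by (simp add: p'_def in_keys_iff lookup_minus lookup_single when_def)
    then show "gt_lex n e u" using p by (auto simp: mintermP_def in_keys_iff split: if_splits)
  qed
  have kq': "\<forall>e\<in>ks q'. gt_lex n e v"
  proof
    fix e assume "e \<in> ks q'"
    then have "lk q e \<noteq> (if v = e then 1 else 0)" by (simp add: q'_def in_keys_iff lookup_minus lookup_single when_def)
    then show "gt_lex n e v" using q by (auto simp: mintermP_def in_keys_iff split: if_splits)
  qed
  have pq: "p * q = sg (u + v) 1 + (sg u 1 * q' + p' * q)"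
    by (simp add: p'_def q'_def algebra_simps sg_mult_sg)
  have k1: "\<forall>e\<in>ks (sg u 1 * q'). gt_lex n e (u + v)"
  proof
    fix e assume "e \<in> ks (sg u 1 * q')"
    then obtain e1 e2 where e: "e = e1 + e2" "e1 \<in> ks (sg u (1::complex))" "e2 \<in> ks q'" using keys_mult_elem by blast
    then show "gt_lex n e (u + v)" using kq' gt_add2 by simp
  qed
  have k2: "\<forall>e\<in>ks (p' * q). gt_lex n e (u + v)"
    by (rule keys_gt_mult[OF kp']) (use q in \<open>simp add: mintermP_def\<close>)
  have k3: "\<forall>e\<in>ks (sg u 1 * q' + p' * q). gt_lex n e (u + v)"
    using k1 k2 keys_add[of "sg u 1 * q'" "p' * q"] by blast
  show ?thesis unfolding mintermP_def
  proof
    have "lk (p * q) (u + v) = lk (sg (u + v) 1) (u + v) + lk (sg u 1 * q' + p' * q) (u + v)"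
      by (simp only: pq lookup_add)
    then show "lk (p * q) (u + v) = 1"
      using lk_zero_if_gt[OF k3] by simp
    show "\<forall>e\<in>ks (p * q). e = u + v \<or> gt_lex n e (u + v)"
      using k3 keys_add[of "sg (u + v) 1" "sg u 1 * q' + p' * q"] unfolding pq by auto
  qed
qed

definition Pairs :: "nat \<Rightarrow> (nat \<times> nat) set" where
  "Pairs n = {(i,j). 1 \<le> i \<and> i < j \<and> j \<le> n}"

lemma finite_Pairs: "finite (Pairs n)"
  by (rule finite_subset[of _ "{1..n} \<times> {1..n}"]) (auto simp: Pairs_def)

lemma Vandermonde_Pairs: "Vandermonde n = (\<Prod>p\<in>Pairs n. pvar (X (fst p)) - pvar (X (snd p)))"
  unfolding Vandermonde_def Pairs_def by (rule prod.cong) auto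

lemma factor_min:
  assumes "1 \<le> i" "i < j" "j \<le> n"
  shows "mintermP n (pvar (X i) - pvar (X j)) (ev (X i))"
proof -
  have ne: "ev (X i) \<noteq> ev (X j)" using assms by (metis lk_ev var.inject(1) less_irrefl zero_neq_one)
  have gt: "gt_lex n (ev (X j)) (ev (X i))"
    unfolding gt_lex_def using assms by (intro bexI[of _ j]) (auto simp: lk_ev)
  show ?thesis
    using ne gt by (auto simp: mintermP_def pvar_ev lookup_minus lookup_single when_def in_keys_iff split: if_splits)
qed

lemma prod_min:
  assumes "finite S" "S \<subseteq> Pairs n"
  shows "mintermP n (\<Prod>p\<in>S. pvar (X (fst p)) - pvar (X (snd p))) (\<Sum>p\<in>S. ev (X (fst p)))"
  using assms
proof (induction S rule: finite_induct)
  case empty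
  then show ?case by (simp add: mintermP_def)
next
  case (insert x S)
  then have "mintermP n (pvar (X (fst x)) - pvar (X (snd x))) (ev (X (fst x)))"
    by (intro factor_min) (auto simp: Pairs_def)
  then show ?case using insert by (simp add: MT)
qed

definition delta :: "nat \<Rightarrow> (var \<Rightarrow>\<^sub>0 nat)" where
  "delta n = (\<Sum>p\<in>Pairs n. ev (X (fst p)))"

lemma Delta_min: "mintermP n (Vandermonde n) (delta n)"
  unfolding Vandermonde_Pairs delta_def by (rule prod_min[OF finite_Pairs]) simp

lemma lk_delta: "lk (delta n) v = (case v of X i \<Rightarrow> (if i \<ge> 1 then n - i else 0) | _ \<Rightarrow> 0)"
proof -
  have "lk (delta n) v = card {p\<in>Pairs n. X (fst p) = v}"
    by (simp add: delta_def lookup_sum lk_ev sum.If_cases finite_Pairs Int_def conj_commute)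
  also have "\<dots> = (case v of X i \<Rightarrow> (if i \<ge> 1 then n - i else 0) | _ \<Rightarrow> 0)"
  proof (cases v)
    case (X i)
    show ?thesis
    proof (cases "i \<ge> 1")
      case True
      have "{p\<in>Pairs n. X (fst p) = v} = (\<lambda>j. (i, j)) ` {i<..n}"
        using X True by (auto simp: Pairs_def)
      then show ?thesis using X True by (simp add: card_image inj_on_def)
    next
      case False
      have e: "{p\<in>Pairs n. X (fst p) = v} = {}" using X False by (auto simp: Pairs_def)
      show ?thesis unfolding e using X False by simp
    qed
  qed auto
  finally show ?thesis .
qed


lemma mderiv_0: "mderiv 0 p = p"
  by (induction p rule: poly_induct) (simp_all add: mderiv_single ff_def mderiv_add)

lemma ff_add_ev: "ff a (c + ev v) = ff a c * of_nat (lk a v - lk c v)"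
proof -
  let ?K = "insert v (ks c)"
  let ?g = "\<lambda>m w. (\<Prod>t<lk m w. (of_nat (lk a w - t) :: complex))"
  have K: "finite ?K" "ks (c + ev v) \<subseteq> ?K" "ks c \<subseteq> ?K"
    using keys_add[of c "ev v"] by (auto simp: ev_def)
  have "ff a (c + ev v) = (\<Prod>w\<in>?K. ?g (c + ev v) w)" by (rule ff_superset[OF K(1,2)])
  also have "\<dots> = ?g (c + ev v) v * (\<Prod>w\<in>?K - {v}. ?g (c + ev v) w)"
    by (rule prod.remove) auto
  also have "(\<Prod>w\<in>?K - {v}. ?g (c + ev v) w) = (\<Prod>w\<in>?K - {v}. ?g c w)"
    by (rule prod.cong) (auto simp: lookup_add lk_ev)
  also have "?g (c + ev v) v = ?g c v * of_nat (lk a v - lk c v)"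
    by (simp add: lookup_add lk_ev)
  also have "ff a c = ?g c v * (\<Prod>w\<in>?K - {v}. ?g c w)"
    by (subst ff_superset[OF K(1,3)]) (rule prod.remove, auto)
  ultimately show ?thesis by (simp add: mult_ac)
qed

lemma mderiv_ev: "mderiv (c + ev v) p = pd v (mderiv c p)"
proof (induction p rule: poly_induct)
  case (2 a x)
  have "a - (c + ev v) = a - c - ev v"
    by (rule poly_mapping_eqI) (simp add: lookup_minus_nat lookup_add)
  then show ?case
    by (simp add: mderiv_single pd_single ff_add_ev lookup_minus_nat mult_ac)
qed (simp_all add: mderiv_add pd_add)

lemma W_mderiv: assumes "ks c \<subseteq> X ` {1..n}" shows "mderiv c (Vandermonde n) \<in> Wset n"
  using assms
proof (induction c rule: monomial_induct[where V="X ` {1..n}"])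
  case 1 then show ?case by (simp add: mderiv_0 W_Delta)
next
  case (2 c v)
  then show ?case by (auto simp: mderiv_ev intro: W_dx)
qed (rule assms)

lemma W_sgmult: assumes "ks b \<subseteq> Lam ` {1..n-1}" "w \<in> Wset n" shows "sg b 1 * w \<in> Wset n"
  using assms(1)
proof (induction b rule: monomial_induct[where V="Lam ` {1..n-1}"])
  case 1 then show ?case using assms(2) by simp
next
  case (2 b v)
  then obtain k where k: "v = Lam k" "k \<in> {1..n-1}" by auto
  have "sg (b + ev v) 1 * w = pvar v * (sg b 1 * w)" by (simp add: sg_add_ev mult_ac)
  then show ?case using 2 k by (simp add: W_lam)
qed (rule assms)

lemma PP_mderiv: "PP f (mderiv c g) = PP (sg c 1 * f) g"
proof (induction c arbitrary: f rule: monomial_induct[where V=UNIV])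
  case 1 then show ?case by (simp add: mderiv_0)
next
  case (2 c v)
  then show ?case by (simp add: mderiv_ev PP_pd sg_add_ev mult_ac)
qed simp

lemma PP_sgmult: "PP f (sg b 1 * g) = PP (mderiv b f) g"
proof (induction b arbitrary: f g rule: monomial_induct[where V=UNIV])
  case 1 then show ?case by (simp add: mderiv_0)
next
  case (2 b v)
  have "PP f (sg (b + ev v) 1 * g) = PP f (sg b 1 * (pvar v * g))" by (simp add: sg_add_ev mult_ac)
  also have "\<dots> = PP (mderiv b f) (pvar v * g)" using 2 by simp
  also have "\<dots> = PP (mderiv (b + ev v) f) g" by (simp add: PP_mult_pvar mderiv_ev)
  finally show ?case .
qed simp

lemma le_pm_iff: "(c + a = (e :: var \<Rightarrow>\<^sub>0 nat)) \<longleftrightarrow> (\<forall>v. lk c v \<le> lk e v) \<and> a = e - c"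
proof
  assume "c + a = e" then show "(\<forall>v. lk c v \<le> lk e v) \<and> a = e - c"
    by (auto simp: lookup_add intro!: poly_mapping_eqI simp: lookup_minus_nat)
next
  assume "(\<forall>v. lk c v \<le> lk e v) \<and> a = e - c"
  then show "c + a = e" by (auto intro!: poly_mapping_eqI simp: lookup_minus_nat lookup_add)
qed

lemma lookup_sg_mult: fixes c :: "var \<Rightarrow>\<^sub>0 nat" and p :: mpoly shows "lk (sg c x * p) e = (if (\<forall>v. lk c v \<le> lk e v) then x * lk p (e - c) else 0)"
proof (induction p rule: poly_induct)
  case (2 a y)
  show ?case using le_pm_iff[of c a e] by (auto simp: sg_mult_sg lookup_single when_def)
qed (simp_all add: distrib_left lookup_add)

lemma lookup_mderiv: "lk (mderiv b r) m = lk r (m + b) * ff (m + b) b"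
proof (induction r rule: poly_induct)
  case (2 a y)
  show ?case
  proof (cases "a = m + b")
    case True
    then have "a - b = m" by (intro poly_mapping_eqI) (simp add: lookup_minus_nat lookup_add)
    then show ?thesis using True by (simp add: mderiv_single lookup_single)
  next
    case False
    show ?thesis
    proof (cases "a - b = m")
      case True
      have "\<exists>v. lk a v < lk b v"
      proof (rule ccontr)
        assume "\<not> ?thesis"
        then have "\<forall>v. lk b v \<le> lk a v" by (simp add: not_less)
        then have "b + (a - b) = a" using le_pm_iff[of b "a - b" a] by simp
        with True False show False by (simp add: add.commute)
      qed
      then show ?thesis using False True by (simp add: mderiv_single lookup_single ff_zero)
    next
      case False2: False
      then show ?thesis using False by (simp add: mderiv_single lookup_single when_def)
    qed
  qed
qed (simp_all add: mderiv_add lookup_add distrib_right)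

lemma ff_nonzero: "(\<forall>v. lk b v \<le> lk m v) \<Longrightarrow> ff m b \<noteq> 0"
  unfolding ff_def by (auto simp: prod_zero_iff) (meson diff_is_0_eq le_trans less_imp_le_nat not_le)

lemma finite_max_gt: "finite S \<Longrightarrow> S \<noteq> {} \<Longrightarrow> \<exists>x\<in>S. \<forall>y\<in>S. \<not> gt_lex n y x"
proof (induction S rule: finite_ne_induct)
  case (singleton x) then show ?case by (simp add: gt_irrefl)
next
  case (insert x S)
  then obtain m where m: "m \<in> S" "\<forall>y\<in>S. \<not> gt_lex n y m" by blast
  show ?case
  proof (cases "gt_lex n x m")
    case True
    then show ?thesis using m gt_trans gt_irrefl by (intro bexI[of _ x]) blast+
  next
    case False
    then show ?thesis using m by auto
  qed
qed


lemma Lam_xlam: "Lam k \<in> xlam_vars n \<longleftrightarrow> k \<in> {1..n-1}" by (auto simp: xlam_vars_def)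
lemma X_xlam_iff: "X j \<in> xlam_vars n \<longleftrightarrow> j \<in> {1..n}" by (auto simp: xlam_vars_def)
lemma Y_xlam: "Y j \<notin> xlam_vars n" by (auto simp: xlam_vars_def)

lemma triangular:
  assumes r0: "r \<noteq> 0" and rx: "poly_in (xlam_vars n) r" and ra: "\<forall>a\<in>ks r. artin n a"
  shows "\<exists>w\<in>Wset n. PP r w \<noteq> 0"
proof -
  obtain m0 where m0: "m0 \<in> ks r" "\<forall>y\<in>ks r. \<not> gt_lex n y m0"
    using finite_max_gt[of "ks r" n] r0 by auto
  have m0x: "ks m0 \<subseteq> xlam_vars n" using rx m0 by (auto simp: poly_in_def)
  have lkm0: "lk m0 v = 0" if "v \<notin> xlam_vars n" for v
    using m0x that by (auto simp: in_keys_iff)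
  define a where "a = (\<Sum>j\<in>{1..n}. sg (X j) (lk m0 (X j)))"
  have lka: "lk a v = (case v of X j \<Rightarrow> (if j \<in> {1..n} then lk m0 v else 0) | _ \<Rightarrow> 0)" for v
  proof (cases v)
    case (X i)
    have "lk a v = (\<Sum>j\<in>{1..n}. if j = i then lk m0 (X j) else 0)"
      unfolding a_def lookup_sum using X by (intro sum.cong) (auto simp: lookup_single when_def)
    then show ?thesis using X by (simp add: sum.delta)
  qed (auto simp: a_def lookup_sum lookup_single when_def)
  define b where "b = m0 - a"
  have lkb: "lk b v = (case v of Lam k \<Rightarrow> lk m0 v | _ \<Rightarrow> 0)" for v
    by (cases v) (auto simp: b_def lookup_minus_nat lka lkm0 Y_xlam X_xlam_iff)
  have m0ab: "m0 = a + b"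
    by (rule poly_mapping_eqI) (auto simp: lookup_add lka lkb lkm0 X_xlam_iff lkm0[OF Y_xlam] split: var.splits)
  have ksb: "ks b \<subseteq> Lam ` {1..n-1}"
  proof
    fix v assume "v \<in> ks b"
    then have "lk b v \<noteq> 0" by (simp add: in_keys_iff)
    then obtain k where "v = Lam k" "lk m0 (Lam k) \<noteq> 0" by (auto simp: lkb split: var.splits)
    then show "v \<in> Lam ` {1..n-1}" using lkm0[of "Lam k"] Lam_xlam[of k n] by auto
  qed
  have art: "artin n m0" using ra m0 by auto
  have a_le: "lk a v \<le> lk (delta n) v" for v
    using art by (auto simp: lka lk_delta artin_def split: var.splits)
  define c where "c = delta n - a"
  have lkc: "lk c v = lk (delta n) v - lk a v" for v by (simp add: c_def lookup_minus_nat)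
  have ksc: "ks c \<subseteq> X ` {1..n}"
  proof
    fix v assume "v \<in> ks c"
    then have "lk (delta n) v \<noteq> 0" by (auto simp: in_keys_iff lkc)
    then show "v \<in> X ` {1..n}" by (auto simp: lk_delta split: var.splits if_splits)
  qed
  define w where "w = sg b 1 * mderiv c (Vandermonde n)"
  have wW: "w \<in> Wset n" unfolding w_def by (intro W_sgmult ksb W_mderiv ksc)
  define F where "F e = lk (sg c 1 * mderiv b r) e * lk (Vandermonde n) e * of_nat (mfact e)" for e
  have "PP r w = PP (sg c 1 * mderiv b r) (Vandermonde n)" by (simp add: w_def PP_sgmult PP_mderiv)
  also have "\<dots> = (\<Sum>e\<in>ks (Vandermonde n). F e)"
    unfolding F_def by (rule PP_superset2) auto
  finally have PPF: "PP r w = (\<Sum>e\<in>ks (Vandermonde n). F e)" .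
  have Dm: "lk (Vandermonde n) (delta n) = 1" "\<forall>e\<in>ks (Vandermonde n). e = delta n \<or> gt_lex n e (delta n)"
    using Delta_min[of n] by (auto simp: mintermP_def)
  have dk: "delta n \<in> ks (Vandermonde n)" using Dm(1) by (simp add: in_keys_iff)
  have Fd: "F (delta n) = lk r m0 * ff m0 b * of_nat (mfact (delta n))"
  proof -
    have cle: "\<forall>v. lk c v \<le> lk (delta n) v" by (simp add: lkc)
    have dc: "delta n - c = a"
      by (rule poly_mapping_eqI) (simp add: lookup_minus_nat lkc a_le)
    show ?thesis using cle dc Dm(1)
      by (simp add: F_def lookup_sg_mult lookup_mderiv m0ab[symmetric])
  qed
  have Fo: "F e = 0" if e: "e \<in> ks (Vandermonde n)" "e \<noteq> delta n" for e
  proof (cases "\<forall>v. lk c v \<le> lk e v")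
    case False then show ?thesis unfolding F_def lookup_sg_mult if_not_P[OF False] by simp
  next
    case True
    have gt: "gt_lex n e (delta n)" using Dm(2) e by auto
    then obtain k where k: "k \<in> {1..n}" "lk e (X k) > lk (delta n) (X k)"
      "\<forall>j\<in>{k<..n}. lk e (X j) = lk (delta n) (X j)" by (auto simp: gt_lex_def)
    have lkM: "lk (e - c + b) (X j) = lk e (X j) - (lk (delta n) (X j) - lk a (X j))" for j
      by (simp add: lookup_add lookup_minus_nat lkc lkb)
    have lkm0X: "lk m0 (X j) = lk a (X j)" for j
      by (subst m0ab) (simp add: lookup_add lkb)
    have "gt_lex n (e - c + b) m0"
      unfolding gt_lex_def
    proof (intro bexI[of _ k] conjI ballI)
      show "lk m0 (X k) < lk (e - c + b) (X k)"
        using k(2) a_le[of "X k"] by (simp add: lkM lkm0X)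
      show "lk (e - c + b) (X j) = lk m0 (X j)" if "j \<in> {k<..n}" for j
        using k(3) that a_le[of "X j"] by (simp add: lkM lkm0X)
    qed (rule k(1))
    then have "e - c + b \<notin> ks r" using m0(2) by blast
    then show ?thesis using True by (simp add: F_def lookup_sg_mult lookup_mderiv in_keys_iff)
  qed
  have "(\<Sum>e\<in>ks (Vandermonde n). F e) = F (delta n) + (\<Sum>e\<in>ks (Vandermonde n) - {delta n}. F e)"
    by (rule sum.remove[OF finite_keys dk])
  also have "(\<Sum>e\<in>ks (Vandermonde n) - {delta n}. F e) = 0"
    using Fo by (intro sum.neutral) auto
  finally have "PP r w = F (delta n)" using PPF by simp
  moreover have "lk r m0 \<noteq> 0" using m0 by (simp add: in_keys_iff)
  moreover have "ff m0 b \<noteq> 0"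
    by (rule ff_nonzero) (auto simp: lkb split: var.splits)
  ultimately have "PP r w \<noteq> 0" using Fd mfact_pos[of "delta n"] by simp
  then show ?thesis using wW by blast
qed


definition tsw :: "nat \<Rightarrow> nat \<Rightarrow> nat" where
  "tsw s j = (if j = s then Suc s else if j = Suc s then s else j)"

lemma tsw_tsw[simp]: "tsw s (tsw s j) = j" by (simp add: tsw_def)
lemma inj_tsw: "inj (tsw s)" by (metis injI tsw_tsw)

definition tv :: "nat \<Rightarrow> var \<Rightarrow> var" where
  "tv s v = (case v of X j \<Rightarrow> X (tsw s j) | _ \<Rightarrow> v)"

lemma tv_tv[simp]: "tv s (tv s v) = v" by (cases v) (simp_all add: tv_def)
lemma inj_tv: "inj (tv s)" by (metis injI tv_tv)
lemma tv_X: "tv s (X j) = X (tsw s j)" by (simp add: tv_def)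

definition rn :: "nat \<Rightarrow> (var \<Rightarrow>\<^sub>0 nat) \<Rightarrow> (var \<Rightarrow>\<^sub>0 nat)" where
  "rn s a = Poly_Mapping.map_key (tv s) a"

lemma lk_rn: "lk (rn s a) v = lk a (tv s v)"
  by (simp add: rn_def map_key.rep_eq[OF inj_tv])

lemma rn_rn[simp]: "rn s (rn s a) = a"
  by (rule poly_mapping_eqI) (simp add: lk_rn)
lemma inj_rn: "inj (rn s)" by (metis injI rn_rn)

lemma rn_add: "rn s (a + b) = rn s a + rn s b"
  by (rule poly_mapping_eqI) (simp add: lk_rn lookup_add)
lemma rn_zero[simp]: "rn s 0 = 0"
  by (rule poly_mapping_eqI) (simp add: lk_rn)
lemma rn_ev: "rn s (ev v) = ev (tv s v)"
  by (rule poly_mapping_eqI) (auto simp: lk_rn lk_ev)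

lemma keys_rn: "ks (rn s a) = tv s ` ks a"
proof -
  have "ks (rn s a) = tv s -` ks a" by (simp add: rn_def keys_map_key[OF inj_tv])
  also have "\<dots> = tv s ` ks a" by (auto simp: image_iff) (metis tv_tv)
  finally show ?thesis .
qed

lemma mfact_rn: "mfact (rn s a) = mfact a"
proof -
  have "mfact (rn s a) = (\<Prod>v\<in>tv s ` ks a. fact (lk a (tv s v)))"
    by (simp add: mfact_def keys_rn lk_rn)
  also have "\<dots> = (\<Prod>v\<in>ks a. fact (lk a (tv s (tv s v))))"
    by (subst prod.reindex) (auto intro: inj_on_subset[OF inj_tv])
  finally show ?thesis by (simp add: mfact_def)
qed

lemma mdeg_rn: "mdeg (rn s a) = mdeg a"
proof -
  have "mdeg (rn s a) = (\<Sum>v\<in>tv s ` ks a. lk a (tv s v))"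
    by (simp add: mdeg_def keys_rn lk_rn)
  also have "\<dots> = (\<Sum>v\<in>ks a. lk a (tv s (tv s v)))"
    by (subst sum.reindex) (auto intro: inj_on_subset[OF inj_tv])
  finally show ?thesis by (simp add: mdeg_def)
qed

definition Rn :: "nat \<Rightarrow> mpoly \<Rightarrow> mpoly" where
  "Rn s p = Poly_Mapping.map_key (rn s) p"

lemma lk_Rn: "lk (Rn s p) e = lk p (rn s e)"
  by (simp add: Rn_def map_key.rep_eq[OF inj_rn])

lemma Rn_single: "Rn s (sg a c) = sg (rn s a) c"
proof -
  have "Rn s (sg (rn s (rn s a)) c) = sg (rn s a) c"
    unfolding Rn_def by (rule map_key_single[OF inj_rn])
  then show ?thesis by simp
qed

lemma Rn_add: "Rn s (p + q) = Rn s p + Rn s q"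
  by (simp add: Rn_def map_key_plus[OF inj_rn])
lemma Rn_zero[simp]: "Rn s 0 = 0"
  by (simp add: Rn_def map_key_zero[OF inj_rn])

lemma Rn_mult: "Rn s (p * q) = Rn s p * Rn s q"
proof (rule bilinear_eq[where L="\<lambda>p q. Rn s (p * q)" and R="\<lambda>p q. Rn s p * Rn s q"])
  fix a b :: "var \<Rightarrow>\<^sub>0 nat" and c d :: complex
  show "Rn s (sg a c * sg b d) = Rn s (sg a c) * Rn s (sg b d)"
    by (simp add: sg_mult_sg Rn_single rn_add)
qed (simp_all add: Rn_add distrib_left distrib_right)

lemma Rn_one[simp]: "Rn s 1 = 1"
  using Rn_single[of s 0 1] by simp

lemma Rn_pvar: "Rn s (pvar v) = pvar (tv s v)"
  by (simp add: pvar_ev Rn_single rn_ev)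

lemma Rn_uminus: "Rn s (- p) = - Rn s p"
  using Rn_add[of s p "-p"] by (simp add: eq_neg_iff_add_eq_0 add.commute)
lemma Rn_diff: "Rn s (p - q) = Rn s p - Rn s q"
  using Rn_add[of s p "-q"] Rn_uminus by simp
lemma Rn_sum: "Rn s (\<Sum>i\<in>A. f i) = (\<Sum>i\<in>A. Rn s (f i))"
  by (induction A rule: infinite_finite_induct) (auto simp: Rn_add)
lemma Rn_prod: "Rn s (\<Prod>i\<in>A. f i) = (\<Prod>i\<in>A. Rn s (f i))"
  by (induction A rule: infinite_finite_induct) (auto simp: Rn_mult)

lemma PP_Rn: "PP (Rn s f) g = PP f (Rn s g)"
proof (rule bilinear_eq[where L="\<lambda>f g. PP (Rn s f) g" and R="\<lambda>f g. PP f (Rn s g)"])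
  fix a b :: "var \<Rightarrow>\<^sub>0 nat" and c d :: complex
  have "(rn s a = b) = (a = rn s b)" by (metis rn_rn)
  then show "PP (Rn s (sg a c)) (sg b d) = PP (sg a c) (Rn s (sg b d))"
    by (auto simp: Rn_single PP_sg mfact_rn)
qed (simp_all add: PP_add1 PP_add2 Rn_add)

lemma Rn_esym:
  assumes "1 \<le> s" "Suc s \<le> n"
  shows "Rn s (esym n i) = esym n i"
proof -
  let ?S = "{S. S \<subseteq> {1..n} \<and> card S = i}"
  have t: "tsw s ` {1..n} \<subseteq> {1..n}" using assms by (auto simp: tsw_def)
  have P: "Rn s (\<Prod>j\<in>S. pvar (X j)) = (\<Prod>j\<in>tsw s ` S. pvar (X j))" for S
    by (simp add: Rn_prod Rn_pvar tv_X prod.reindex[OF inj_on_subset[OF inj_tsw]])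
  have img: "image (tsw s) ` ?S = ?S"
  proof
    show "image (tsw s) ` ?S \<subseteq> ?S"
      using t by (auto simp: card_image inj_on_subset[OF inj_tsw])
    show "?S \<subseteq> image (tsw s) ` ?S"
    proof
      fix S assume S: "S \<in> ?S"
      have "S = tsw s ` (tsw s ` S)" by (simp add: image_image)
      moreover have "tsw s ` S \<in> ?S" using S t by (auto simp: card_image inj_on_subset[OF inj_tsw])
      ultimately show "S \<in> image (tsw s) ` ?S" by blast
    qed
  qed
  have "Rn s (esym n i) = (\<Sum>S\<in>?S. \<Prod>j\<in>tsw s ` S. pvar (X j))"
    by (simp add: esym_def Rn_sum P)
  also have "\<dots> = (\<Sum>S\<in>image (tsw s) ` ?S. \<Prod>j\<in>S. pvar (X j))"
  proof (subst sum.reindex)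
    have "tsw s ` tsw s ` S = S" for S by (simp add: image_image)
    then have "inj (image (tsw s))" by (metis injI)
    then show "inj_on (image (tsw s)) ?S" by (rule inj_on_subset) simp
  qed simp
  also have "\<dots> = esym n i" by (simp only: img esym_def)
  finally show ?thesis .
qed

lemma Pairs_swap:
  assumes "1 \<le> s" "Suc s \<le> n" "(i, j) \<in> Pairs n" "(i, j) \<noteq> (s, Suc s)"
  shows "(tsw s i, tsw s j) \<in> Pairs n \<and> (tsw s i, tsw s j) \<noteq> (s, Suc s)"
  using assms by (auto simp: Pairs_def tsw_def)

lemma Rn_Delta:
  assumes "1 \<le> s" "Suc s \<le> n"
  shows "Rn s (Vandermonde n) = - Vandermonde n"
proof -
  define g where "g p = pvar (X (fst p)) - pvar (X (snd p))" for p
  define h where "h p = (tsw s (fst p), tsw s (snd p))" for p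
  define p0 where "p0 = (s, Suc s)"
  define R where "R = Pairs n - {p0}"
  have hh: "h (h p) = p" for p by (simp add: h_def)
  have injh: "inj h" by (metis injI hh)
  have p0P: "p0 \<in> Pairs n" using assms by (simp add: p0_def Pairs_def)
  have hR: "h ` R = R"
  proof
    show "h ` R \<subseteq> R"
    proof
      fix x assume "x \<in> h ` R"
      then obtain i j where ij: "(i, j) \<in> R" "x = h (i, j)" by auto
      then show "x \<in> R" using Pairs_swap[OF assms, of i j] by (simp add: R_def h_def p0_def)
    qed
    then have "h ` h ` R \<subseteq> h ` R" by blast
    then show "R \<subseteq> h ` R" by (simp add: image_image hh)
  qed
  have D: "Vandermonde n = g p0 * (\<Prod>p\<in>R. g p)"
    unfolding Vandermonde_Pairs g_def[symmetric] R_def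
    by (rule prod.remove[OF finite_Pairs p0P])
  have "Rn s (Vandermonde n) = Rn s (g p0) * (\<Prod>p\<in>R. Rn s (g p))"
    by (simp add: D Rn_mult Rn_prod)
  also have "(\<Prod>p\<in>R. Rn s (g p)) = (\<Prod>p\<in>R. g (h p))"
    by (simp add: g_def h_def Rn_diff Rn_pvar tv_X)
  also have "\<dots> = (\<Prod>p\<in>h ` R. g p)"
    by (subst prod.reindex) (auto intro: inj_on_subset[OF injh])
  also have "\<dots> = (\<Prod>p\<in>R. g p)" by (simp only: hR)
  also have "Rn s (g p0) = - g p0"
    by (simp add: g_def p0_def Rn_diff Rn_pvar tv_X tsw_def)
  finally show ?thesis by (simp add: D)
qed


definition hom :: "nat \<Rightarrow> mpoly \<Rightarrow> bool" where
  "hom d p \<longleftrightarrow> (\<forall>e\<in>ks p. mdeg e = d)"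

lemma hom_mult: assumes "hom d p" "hom d' q" shows "hom (d + d') (p * q)"
  unfolding hom_def
proof
  fix x assume "x \<in> ks (p * q)"
  then obtain a b where "x = a + b" "a \<in> ks p" "b \<in> ks q" using keys_mult_elem by blast
  then show "mdeg x = d + d'" using assms by (simp add: hom_def mdeg_add)
qed

lemma hom_add: "hom d p \<Longrightarrow> hom d q \<Longrightarrow> hom d (p + q)"
  unfolding hom_def using keys_add[of p q] by blast
lemma hom_uminus: "hom d p \<Longrightarrow> hom d (- p)" by (simp add: hom_def)
lemma hom_diff: "hom d p \<Longrightarrow> hom d q \<Longrightarrow> hom d (p - q)"
  using hom_add[of d p "-q"] hom_uminus by simp
lemma hom_zero[simp]: "hom d 0" by (simp add: hom_def)
lemma hom_sum: "(\<And>i. i \<in> A \<Longrightarrow> hom d (f i)) \<Longrightarrow> hom d (\<Sum>i\<in>A. f i)"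
  by (induction A rule: infinite_finite_induct) (auto intro: hom_add)
lemma hom_pvar: "hom 1 (pvar v)" by (simp add: hom_def pvar_ev)
lemma hom_one: "hom 0 1" by (simp add: hom_def mdeg_def)

lemma hom_prod1: "finite S \<Longrightarrow> (\<And>i. i \<in> S \<Longrightarrow> hom 1 (f i)) \<Longrightarrow> hom (card S) (\<Prod>i\<in>S. f i)"
proof (induction S rule: finite_induct)
  case empty then show ?case by (simp add: hom_one)
next
  case (insert x S)
  then have "hom (1 + card S) (f x * (\<Prod>i\<in>S. f i))" by (intro hom_mult) auto
  then show ?case using insert by simp
qed

lemma hom_Delta: "hom (card (Pairs n)) (Vandermonde n)"
  unfolding Vandermonde_Pairs by (rule hom_prod1[OF finite_Pairs]) (intro hom_diff hom_pvar)

lemma hom_esym: "hom i (esym n i)"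
  unfolding esym_def
proof (rule hom_sum)
  fix S assume "S \<in> {S. S \<subseteq> {1..n} \<and> card S = i}"
  then have "finite S" "card S = i" by (auto dest: finite_subset)
  then show "hom i (\<Prod>j\<in>S. pvar (X j))" using hom_prod1[of S "\<lambda>j. pvar (X j)"] hom_pvar by simp
qed

lemma sum_card_le: "finite A \<Longrightarrow> (\<Sum>k<card A. k) \<le> \<Sum>A"
proof (induction "card A" arbitrary: A)
  case 0 then show ?case by simp
next
  case (Suc m)
  then have ne: "A \<noteq> {}" by auto
  define M where "M = Max A"
  have M: "M \<in> A" using Suc ne by (simp add: M_def)
  have "A \<subseteq> {0..M}" using Suc by (auto simp: M_def)
  then have "card A \<le> Suc M" using card_mono[of "{0..M}" A] by simp
  then have mM: "m \<le> M" using Suc by simp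
  have c: "card (A - {M}) = m" using Suc M by simp
  have "(\<Sum>k<card (A - {M}). k) \<le> \<Sum>(A - {M})" using Suc.hyps(1)[of "A - {M}"] c Suc.prems by simp
  moreover have "\<Sum>A = M + \<Sum>(A - {M})" using Suc M by (simp add: sum.remove)
  moreover have "(\<Sum>k<card A. k) = m + (\<Sum>k<m. k)" unfolding Suc.hyps(2)[symmetric] by simp
  ultimately show ?case using mM c by simp
qed

lemma sum_n_minus: "(\<Sum>i\<in>{1..n}. n - i) = (\<Sum>k<n. (k::nat))"
proof -
  have "(\<Sum>k<n. k) = (\<Sum>i\<in>(\<lambda>i. n - i) ` {1..n}. i)"
  proof -
    have "(\<lambda>i. n - i) ` {1..n} = {..<n}"
    proof
      show "(\<lambda>i. n - i) ` {1..n} \<subseteq> {..<n}" by auto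
      show "{..<n} \<subseteq> (\<lambda>i. n - i) ` {1..n}"
      proof
        fix k assume "k \<in> {..<n}"
        then have "k = n - (n - k)" "n - k \<in> {1..n}" by auto
        then show "k \<in> (\<lambda>i. n - i) ` {1..n}" by blast
      qed
    qed
    then show ?thesis by simp
  qed
  also have "\<dots> = (\<Sum>i\<in>{1..n}. n - i)"
    by (subst sum.reindex) (auto simp: inj_on_def)
  finally show ?thesis by simp
qed

lemma mdeg_Xpart: "ks a \<subseteq> X ` {1..n} \<Longrightarrow> mdeg a = (\<Sum>j\<in>{1..n}. lk a (X j))"
  by (subst mdeg_superset[of "X ` {1..n}"]) (auto simp: sum.reindex inj_on_def)

lemma N_eq: "card (Pairs n) = (\<Sum>k<n. k)"
proof -
  have dk: "delta n \<in> ks (Vandermonde n)" using Delta_min[of n] by (simp add: mintermP_def in_keys_iff)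
  then have "mdeg (delta n) = card (Pairs n)" using hom_Delta[of n] by (simp add: hom_def)
  moreover have "ks (delta n) \<subseteq> X ` {1..n}"
    using dk Vandermonde_poly_in[of n] by (auto simp: poly_in_def)
  ultimately have "card (Pairs n) = (\<Sum>j\<in>{1..n}. lk (delta n) (X j))" by (simp add: mdeg_Xpart)
  also have "\<dots> = (\<Sum>j\<in>{1..n}. n - j)" by (rule sum.cong) (auto simp: lk_delta)
  also have "\<dots> = (\<Sum>k<n. k)" by (rule sum_n_minus)
  finally show ?thesis .
qed

lemma pigeon:
  assumes "ks a \<subseteq> X ` {1..n}" "mdeg a < card (Pairs n)"
  shows "\<exists>j k. 1 \<le> j \<and> j < k \<and> k \<le> n \<and> lk a (X j) = lk a (X k)"
proof (rule ccontr)
  assume na: "\<not> ?thesis"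
  have "inj_on (\<lambda>j. lk a (X j)) {1..n}"
  proof (rule inj_onI)
    fix j k assume "j \<in> {1..n}" "k \<in> {1..n}" "lk a (X j) = lk a (X k)"
    then show "j = k" using na by (metis atLeastAtMost_iff linorder_neqE_nat)
  qed
  then have "(\<Sum>j\<in>{1..n}. lk a (X j)) = \<Sum>((\<lambda>j. lk a (X j)) ` {1..n})"
    by (simp add: sum.reindex)
  moreover have "card ((\<lambda>j. lk a (X j)) ` {1..n}) = n"
    using \<open>inj_on _ _\<close> by (simp add: card_image)
  ultimately have "(\<Sum>k<n. k) \<le> (\<Sum>j\<in>{1..n}. lk a (X j))"
    using sum_card_le[of "(\<lambda>j. lk a (X j)) ` {1..n}"] by simp
  then show False using assms by (simp add: mdeg_Xpart N_eq)
qed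

definition cc :: "nat \<Rightarrow> nat \<Rightarrow> (var \<Rightarrow>\<^sub>0 nat) \<Rightarrow> complex" where
  "cc n i a = PP (sg a 1 * esym n i) (Vandermonde n)"

lemma cc_antisym:
  assumes "1 \<le> s" "Suc s \<le> n"
  shows "cc n i (rn s a) = - cc n i a"
proof -
  have "sg (rn s a) 1 * esym n i = Rn s (sg a 1 * esym n i)"
    by (simp add: Rn_mult Rn_single Rn_esym[OF assms])
  then show ?thesis by (simp add: cc_def PP_Rn Rn_Delta[OF assms] PP_uminus2)
qed

lemma cc_support:
  assumes "cc n i a \<noteq> 0"
  shows "ks a \<subseteq> X ` {1..n} \<and> mdeg a + i = card (Pairs n)"
proof -
  have "cc n i a = (\<Sum>x\<in>ks (sg a 1 * esym n i). lk (sg a 1 * esym n i) x * lk (Vandermonde n) x * of_nat (mfact x))"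
    by (simp add: cc_def PP_def)
  then obtain x where x: "x \<in> ks (sg a 1 * esym n i)" "lk (Vandermonde n) x \<noteq> 0"
    using assms by (metis (no_types, lifting) mult_not_zero mult_zero_left sum.neutral)
  then obtain a' y where ay: "x = a' + y" "a' \<in> ks (sg a (1::complex))" "y \<in> ks (esym n i)"
    using keys_mult_elem by blast
  then have a': "a' = a" by simp
  have xD: "x \<in> ks (Vandermonde n)" using x by (simp add: in_keys_iff)
  then have "mdeg x = card (Pairs n)" using hom_Delta[of n] by (simp add: hom_def)
  moreover have "mdeg y = i" using ay hom_esym[of i n] by (simp add: hom_def)
  ultimately have d: "mdeg a + i = card (Pairs n)" using ay a' by (simp add: mdeg_add)
  have "ks x \<subseteq> X ` {1..n}" using xD Vandermonde_poly_in[of n] by (auto simp: poly_in_def)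
  then have "ks a \<subseteq> X ` {1..n}" using keys_add_nat[of a y] ay a' by blast
  then show ?thesis using d by simp
qed

lemma cc_rep:
  assumes "1 \<le> j" "j < k" "k \<le> n" "lk a (X j) = lk a (X k)"
  shows "cc n i a = 0"
  using assms
proof (induction "k - j" arbitrary: a k)
  case 0 then show ?case by simp
next
  case (Suc d)
  show ?case
  proof (cases "k = Suc j")
    case True
    have "rn j a = a"
      by (rule poly_mapping_eqI) (use Suc.prems True in \<open>auto simp: lk_rn tv_def tsw_def split: var.splits\<close>)
    then have "cc n i a = - cc n i a" using cc_antisym[of j n i a] Suc.prems True by simp
    then show ?thesis by simp
  next
    case False
    define s where "s = k - 1"
    have s: "1 \<le> s" "Suc s \<le> n" "j < s" "Suc s = k" using Suc.prems False by (auto simp: s_def)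
    define a' where "a' = rn s a"
    have "lk a' (X s) = lk a (X k)" using s by (simp add: a'_def lk_rn tv_X tsw_def)
    moreover have "lk a' (X j) = lk a (X j)" using s by (simp add: a'_def lk_rn tv_X tsw_def)
    ultimately have "lk a' (X j) = lk a' (X s)" using Suc.prems by simp
    then have "cc n i a' = 0" using Suc s by (intro Suc.hyps) auto
    then show ?thesis using cc_antisym[OF s(1,2), of i a] by (simp add: a'_def)
  qed
qed

lemma cc_zero: assumes "i \<in> {1..n}" shows "cc n i a = 0"
proof (rule ccontr)
  assume "cc n i a \<noteq> 0"
  from cc_support[OF this] have "ks a \<subseteq> X ` {1..n}" "mdeg a + i = card (Pairs n)" by auto
  moreover have "mdeg a < card (Pairs n)" using calculation assms by simp
  ultimately obtain j k where "1 \<le> j" "j < k" "k \<le> n" "lk a (X j) = lk a (X k)"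
    using pigeon by blast
  then have "cc n i a = 0" by (rule cc_rep)
  with \<open>cc n i a \<noteq> 0\<close> show False by simp
qed

lemma B_esym': assumes "i \<in> {1..n}" shows "PP (q * esym n i) (Vandermonde n) = 0"
proof -
  have "q = (\<Sum>a\<in>ks q. sg a (lk q a))" by (rule poly_sum_singles)
  also have "\<dots> = (\<Sum>a\<in>ks q. const (lk q a) * sg a 1)" by (simp add: const_mult_sg)
  finally have qq: "q = (\<Sum>a\<in>ks q. const (lk q a) * sg a 1)" .
  have "q * esym n i = (\<Sum>a\<in>ks q. const (lk q a) * sg a 1) * esym n i"
    using qq by (rule arg_cong[where f="\<lambda>x. x * esym n i"])
  also have "\<dots> = (\<Sum>a\<in>ks q. const (lk q a) * (sg a 1 * esym n i))"
    by (simp add: sum_distrib_right mult.assoc)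
  finally have q: "q * esym n i = (\<Sum>a\<in>ks q. const (lk q a) * (sg a 1 * esym n i))" .
  have "PP (q * esym n i) (Vandermonde n) = (\<Sum>a\<in>ks q. lk q a * cc n i a)"
    unfolding q PP_sum1 PP_smult1 cc_def ..
  also have "\<dots> = 0" using cc_zero[OF assms] by simp
  finally show ?thesis .
qed


lemma esym_poly_in: "poly_in (X ` {1..n}) (esym n i)"
  unfolding esym_def by (intro poly_in_sum poly_in_prod poly_in_pvar) auto

lemma B_esym: "i \<in> {1..n} \<Longrightarrow> PP (q * esym n i) (Vandermonde n) = 0"
  by (rule B_esym')

lemma ideal_orth_W:
  assumes "w \<in> Wset n" "i \<in> {1..n}"
  shows "PP (q * esym n i) w = 0"
  using assms(1)
proof (induction w arbitrary: q rule: Wset.induct)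
  case W_Delta
  then show ?case using B_esym[OF assms(2)] by simp
next
  case (W_add p p')
  then show ?case by (simp add: PP_add2)
next
  case (W_smult p c)
  then show ?case by (simp add: PP_smult2)
next
  case (W_dx p j)
  have "PP (q * esym n i) (pd (X j) p) = PP ((pvar (X j) * q) * esym n i) p"
    by (simp add: PP_pd mult.assoc)
  then show ?case using W_dx by simp
next
  case (W_lam p k)
  have z: "pd (Lam k) (esym n i) = 0"
    by (rule pd_notin[OF esym_poly_in]) auto
  have "PP (q * esym n i) (pvar (Lam k) * p) = PP (pd (Lam k) q * esym n i) p"
    by (simp add: PP_mult_pvar pd_mult z)
  then show ?case using W_lam by simp
qed simp

lemma ideal_orth:
  assumes "in_esym_ideal n G" "w \<in> Wset n"
  shows "PP G w = 0"
proof -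
  from assms(1) obtain q where "G = (\<Sum>i = 1..n. q i * esym n i)"
    unfolding in_esym_ideal_def by blast
  then show ?thesis using ideal_orth_W[OF assms(2)] by (simp add: PP_sum1)
qed

lemma Phi_poly_in:
  assumes "poly_in (xy_vars n) f"
  shows "poly_in (xlam_vars n) (Phi n f)"
proof (rule poly_induct_keys[where Q="\<lambda>a. ks a \<subseteq> xy_vars n" and P="\<lambda>f. poly_in (xlam_vars n) (Phi n f)"])
  fix a :: "var \<Rightarrow>\<^sub>0 nat" and c :: complex assume a: "ks a \<subseteq> xy_vars n"
  have "poly_in (xlam_vars n) (phi_subst n v)" if "v \<in> xy_vars n" for v
  proof -
    from that consider (x) i where "v = X i" "i \<in> {1..n}" | (y) j where "v = Y j" "j \<in> {1..n}"
      by (auto simp: xy_vars_def)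
    then show ?thesis
    proof cases
      case x then show ?thesis by (simp add: Phi_X poly_in_pvar X_xlam_iff)
    next
      case y
      have "poly_in (xlam_vars n) (phi n (pvar (X j)))" unfolding phi_def
        using y by (intro poly_in_sum poly_in_mult poly_in_power poly_in_pvar) (auto simp: xlam_vars_def)
      then show ?thesis using y by (simp add: Phi_Y)
    qed
  qed
  then show "poly_in (xlam_vars n) (Phi n (sg a c))"
    using a unfolding subst_single mon_def by (intro poly_in_mult poly_in_const poly_in_prod poly_in_power) auto
next
  fix p q assume "poly_in (xlam_vars n) (Phi n p)" "poly_in (xlam_vars n) (Phi n q)"
  then show "poly_in (xlam_vars n) (Phi n (p + q))" by (simp add: subst_add poly_in_add)
qed (use assms in \<open>simp_all add: poly_in_def\<close>)

theorem proposition4p4: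
  fixes n :: nat and f :: mpoly
  assumes "n \<ge> 1" and "poly_in (xy_vars n) f"
  shows "f \<in> orth (OP n) \<longleftrightarrow> in_esym_ideal n (subst (phi_subst n) f)"
proof -
  let ?G = "Phi n f"
  have G: "poly_in (xlam_vars n) ?G" by (rule Phi_poly_in[OF assms(2)])
  have "(\<forall>w\<in>Wset n. PP ?G w = 0) \<longleftrightarrow> in_esym_ideal n ?G"
  proof
    assume o: "\<forall>w\<in>Wset n. PP ?G w = 0"
    from NF_all[OF G] obtain r q where rq: "?G = r + q" "poly_in (xlam_vars n) r"
      "\<forall>a\<in>ks r. artin n a" "in_esym_ideal n q" unfolding NF_def by blast
    have "\<forall>w\<in>Wset n. PP r w = 0"
    proof
      fix w assume w: "w \<in> Wset n"
      have "PP r w = PP ?G w - PP q w" using rq(1) by (simp add: PP_add1)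
      then show "PP r w = 0" using o w ideal_orth[OF rq(4) w] by simp
    qed
    then have "r = 0" using triangular[OF _ rq(2) rq(3)] by blast
    then show "in_esym_ideal n ?G" using rq by simp
  next
    assume "in_esym_ideal n ?G"
    then show "\<forall>w\<in>Wset n. PP ?G w = 0" using ideal_orth by blast
  qed
  then show ?thesis using orth_iff_W[OF assms(2)] by simp
qed


end
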